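(* Let $D$ be a division algebra and let $\sigma_1,\sigma_2$ be two commuting automorphisms of $D$. In the skew polynomial ring $T=D[t_1,t_2;\sigma_1,\sigma_2]$, let $I$ be the two-sided ideal generated by $t_1t_2$, and let $S=T/I$. Then $S$ is automorphically normalizable over $D$ if and only if $\sigma_1^{k_1}\circ\sigma_2^{-k_2}$ is an inner automorphism of $D$ for some positive integers $k_1,k_2$.
   Context: All rings are associative with unity. An inner automorphism of $D$ is a map $r\mapsto crc^{-1}$ with $c\in D^\times$. $D[t_1,t_2;\sigma_1,\sigma_2]$ is the skew polynomial ring in two commuting variables with $t_ia=\sigma_i(a)t_i$ for $a\in D$. For a ring $S\supseteq D$, $a\in S$ is automorphic over $D$ with respect to $\tau\in\mathrm{Aut}(D)$ if $ab=\tau(b)a$ for all $b\in D$. Commuting $a_1,\ldots,a_m\in S$ are (left) algebraically independent over $D$ if monomials in them are left linearly independent over $D$. $S$ is automorphically normalizable over $D$ if there exist $m\ge0$ and commuting $a_1,\ldots,a_m\in S$, automorphic over $D$ with respect to pairwise commuting automorphisms, left algebraically independent over $D$, such that $S$ is finitely generated as a left module over the subring $D[a_1,\ldots,a_m]$ generated by $D\cup\{a_1,\ldots,a_m\}$. *)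

theory Defs
  imports "HOL-Algebra.QuotRing" "HOL-Algebra.Generated_Rings"
begin

definition ring_aut :: "('a::division_ring \<Rightarrow> 'a) \<Rightarrow> bool" where
  "ring_aut \<sigma> \<longleftrightarrow> bij \<sigma> \<and> (\<forall>x y. \<sigma> (x + y) = \<sigma> x + \<sigma> y)
     \<and> (\<forall>x y. \<sigma> (x * y) = \<sigma> x * \<sigma> y) \<and> \<sigma> 1 = 1"

definition inner_aut :: "('a::division_ring \<Rightarrow> 'a) \<Rightarrow> bool" where
  "inner_aut f \<longleftrightarrow> (\<exists>c. c \<noteq> 0 \<and> (\<forall>r. f r = c * r * inverse c))"

text \<open>The skew polynomial ring T = D[t1,t2;s1,s2]: an element is a finitely supported
  coefficient function; f (i,j) is the left coefficient of t1^i t2^j.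
  (a t1^i t2^j)(b t1^k t2^l) = a s1^i(s2^j(b)) t1^(i+k) t2^(j+l).\<close>
definition skew_poly2 ::
  "('a::division_ring \<Rightarrow> 'a) \<Rightarrow> ('a \<Rightarrow> 'a) \<Rightarrow> (nat \<times> nat \<Rightarrow> 'a) ring" where
  "skew_poly2 s1 s2 =
    \<lparr> carrier = {f. finite {m. f m \<noteq> 0}},
      mult = (\<lambda>f g (p, q). \<Sum>(i, j)\<in>{0..p} \<times> {0..q}.
                 f (i, j) * (s1 ^^ i) ((s2 ^^ j) (g (p - i, q - j)))),
      one = (\<lambda>m. if m = (0, 0) then 1 else 0),
      zero = (\<lambda>m. 0),
      add = (\<lambda>f g m. f m + g m) \<rparr>"

definition skew_var1 :: "nat \<times> nat \<Rightarrow> 'a::division_ring" where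
  "skew_var1 = (\<lambda>m. if m = (1, 0) then 1 else 0)"
definition skew_var2 :: "nat \<times> nat \<Rightarrow> 'a::division_ring" where
  "skew_var2 = (\<lambda>m. if m = (0, 1) then 1 else 0)"
definition skew_const :: "'a::division_ring \<Rightarrow> nat \<times> nat \<Rightarrow> 'a" where
  "skew_const a = (\<lambda>m. if m = (0, 0) then a else 0)"

definition ideal_t1t2 :: "('a::division_ring \<Rightarrow> 'a) \<Rightarrow> ('a \<Rightarrow> 'a) \<Rightarrow> (nat \<times> nat \<Rightarrow> 'a) set" where
  "ideal_t1t2 s1 s2 = genideal (skew_poly2 s1 s2) {skew_var1 \<otimes>\<^bsub>skew_poly2 s1 s2\<^esub> skew_var2}"

definition S_ring :: "('a::division_ring \<Rightarrow> 'a) \<Rightarrow> ('a \<Rightarrow> 'a) \<Rightarrow> (nat \<times> nat \<Rightarrow> 'a) set ring" where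
  "S_ring s1 s2 = skew_poly2 s1 s2 Quot ideal_t1t2 s1 s2"

definition S_emb :: "('a::division_ring \<Rightarrow> 'a) \<Rightarrow> ('a \<Rightarrow> 'a) \<Rightarrow> 'a \<Rightarrow> (nat \<times> nat \<Rightarrow> 'a) set" where
  "S_emb s1 s2 a = ideal_t1t2 s1 s2 +>\<^bsub>skew_poly2 s1 s2\<^esub> skew_const a"

primrec monomial_in :: "('b, 'c) ring_scheme \<Rightarrow> (nat \<Rightarrow> 'b) \<Rightarrow> (nat \<Rightarrow> nat) \<Rightarrow> nat \<Rightarrow> 'b" where
  "monomial_in S a e 0 = \<one>\<^bsub>S\<^esub>"
| "monomial_in S a e (Suc k) = monomial_in S a e k \<otimes>\<^bsub>S\<^esub> (a k [^]\<^bsub>S\<^esub> e k)"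

definition aut_normalizable ::
  "('b, 'c) ring_scheme \<Rightarrow> ('a::division_ring \<Rightarrow> 'b) \<Rightarrow> bool" where
  "aut_normalizable S emb \<longleftrightarrow>
    (\<exists>(m::nat) (a :: nat \<Rightarrow> 'b) (\<tau> :: nat \<Rightarrow> 'a \<Rightarrow> 'a).
       (\<forall>i<m. a i \<in> carrier S)
     \<and> (\<forall>i<m. \<forall>j<m. a i \<otimes>\<^bsub>S\<^esub> a j = a j \<otimes>\<^bsub>S\<^esub> a i)
     \<and> (\<forall>i<m. ring_aut (\<tau> i))
     \<and> (\<forall>i<m. \<forall>j<m. \<tau> i \<circ> \<tau> j = \<tau> j \<circ> \<tau> i)
     \<and> (\<forall>i<m. \<forall>b. a i \<otimes>\<^bsub>S\<^esub> emb b = emb (\<tau> i b) \<otimes>\<^bsub>S\<^esub> a i)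
     \<comment> \<open>left algebraic independence: distinct monomials are left D-linearly independent\<close>
     \<and> (\<forall>E c. finite E \<and> (\<forall>e\<in>E. \<forall>i\<ge>m. e i = 0)
              \<and> finsum S (\<lambda>e. emb (c e) \<otimes>\<^bsub>S\<^esub> monomial_in S a e m) E = \<zero>\<^bsub>S\<^esub>
              \<longrightarrow> (\<forall>e\<in>E. c e = 0))
     \<comment> \<open>S is a finitely generated left module over the subring D[a_0,...,a_(m-1)]\<close>
     \<and> (\<exists>F. finite F \<and> F \<subseteq> carrier S \<and>
          (\<forall>s\<in>carrier S. \<exists>r. (\<forall>f\<in>F. r f \<in> generate_ring S (range emb \<union> a ` {..<m}))
               \<and> s = finsum S (\<lambda>f. r f \<otimes>\<^bsub>S\<^esub> f) F)))"

end

theory Submission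
  imports Defs
begin

lemma conv1:
  fixes G :: "nat \<Rightarrow> nat \<Rightarrow> nat \<Rightarrow> 'b::comm_monoid_add"
  shows "(\<Sum>i\<le>p. \<Sum>k\<le>i. G k (i-k) (p-i)) = (\<Sum>k\<le>p. \<Sum>a\<le>p-k. G k a (p-k-a))"
proof -
  have "(\<Sum>i\<le>p. \<Sum>k\<le>i. G k (i-k) (p-i)) = (\<Sum>i\<le>p. \<Sum>k\<le>i. G k (i-k) (p-(k+(i-k))))"
    by (intro sum.cong refl) auto
  also have "\<dots> = (\<Sum>(k,a)\<in>{(k,a). k+a \<le> p}. G k a (p-(k+a)))"
    by (rule sum.triangle_reindex_eq[symmetric])
  also have "{(k,a). k+a \<le> p} = Sigma {..p} (\<lambda>k. {..p-k})" by auto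
  also have "(\<Sum>(k,a)\<in>Sigma {..p} (\<lambda>k. {..p-k}). G k a (p-(k+a))) = (\<Sum>k\<le>p. \<Sum>a\<le>p-k. G k a (p-(k+a)))"
    by (rule sum.Sigma[symmetric]) auto
  finally show ?thesis by (simp add: diff_diff_left)
qed

lemma conv2:
  fixes F :: "nat \<Rightarrow> nat \<Rightarrow> nat \<Rightarrow> nat \<Rightarrow> nat \<Rightarrow> nat \<Rightarrow> 'b::comm_monoid_add"
  shows "(\<Sum>i\<le>p. \<Sum>j\<le>q. \<Sum>k\<le>i. \<Sum>l\<le>j. F k l (i-k) (j-l) (p-i) (q-j))
       = (\<Sum>k\<le>p. \<Sum>l\<le>q. \<Sum>a\<le>p-k. \<Sum>b\<le>q-l. F k l a b (p-k-a) (q-l-b))"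
proof -
  have "(\<Sum>i\<le>p. \<Sum>j\<le>q. \<Sum>k\<le>i. \<Sum>l\<le>j. F k l (i-k) (j-l) (p-i) (q-j))
      = (\<Sum>i\<le>p. \<Sum>k\<le>i. \<Sum>j\<le>q. \<Sum>l\<le>j. F k l (i-k) (j-l) (p-i) (q-j))"
    by (intro sum.cong refl sum.swap)
  also have "\<dots> = (\<Sum>k\<le>p. \<Sum>a\<le>p-k. \<Sum>j\<le>q. \<Sum>l\<le>j. F k l a (j-l) (p-k-a) (q-j))"
    by (rule conv1[where G="\<lambda>k a c. \<Sum>j\<le>q. \<Sum>l\<le>j. F k l a (j-l) c (q-j)"])
  also have "\<dots> = (\<Sum>k\<le>p. \<Sum>a\<le>p-k. \<Sum>l\<le>q. \<Sum>b\<le>q-l. F k l a b (p-k-a) (q-l-b))"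
    by (intro sum.cong refl conv1[where G="\<lambda>l b d. F _ l _ b _ d"])
  also have "\<dots> = (\<Sum>k\<le>p. \<Sum>l\<le>q. \<Sum>a\<le>p-k. \<Sum>b\<le>q-l. F k l a b (p-k-a) (q-l-b))"
    by (intro sum.cong refl sum.swap)
  finally show ?thesis .
qed

lemma ring_aut_add: "ring_aut f \<Longrightarrow> f (x + y) = f x + f y" by (simp add: ring_aut_def)
lemma ring_aut_mult: "ring_aut f \<Longrightarrow> f (x * y) = f x * f y" by (simp add: ring_aut_def)
lemma ring_aut_one: "ring_aut f \<Longrightarrow> f 1 = 1" by (simp add: ring_aut_def)
lemma ring_aut_zero: "ring_aut f \<Longrightarrow> f 0 = 0"
  using ring_aut_add[of f 0 0] by simp
lemma ring_aut_inj: "ring_aut f \<Longrightarrow> inj f" by (simp add: ring_aut_def bij_def)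
lemma ring_aut_eq0: "ring_aut f \<Longrightarrow> (f x = 0) = (x = 0)"
  using ring_aut_inj[of f] ring_aut_zero[of f] by (metis injD)
lemma ring_aut_uminus: "ring_aut f \<Longrightarrow> f (- x) = - f x"
proof -
  assume "ring_aut f"
  hence "f x + f (-x) = 0" using ring_aut_add[of f x "-x"] ring_aut_zero[of f] by simp
  thus ?thesis by (metis minus_unique)
qed
lemma ring_aut_sum: "ring_aut f \<Longrightarrow> f (sum g A) = (\<Sum>x\<in>A. f (g x))"
  by (induct A rule: infinite_finite_induct) (auto simp: ring_aut_zero ring_aut_add)
lemma ring_aut_id: "ring_aut id" by (simp add: ring_aut_def)
lemma ring_aut_comp: "ring_aut f \<Longrightarrow> ring_aut g \<Longrightarrow> ring_aut (f \<circ> g)"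
  by (simp add: ring_aut_def bij_comp)
lemma ring_aut_pow: "ring_aut f \<Longrightarrow> ring_aut (f ^^ n)"
  by (induct n) (auto simp: ring_aut_id ring_aut_comp)

lemma funpow_comm: "f \<circ> g = g \<circ> f \<Longrightarrow> (f ^^ n) \<circ> g = g \<circ> (f ^^ n)"
  by (induct n) (auto simp: comp_assoc, metis comp_assoc)
lemma funpow_comm2: "f \<circ> g = g \<circ> f \<Longrightarrow> (f ^^ n) \<circ> (g ^^ m) = (g ^^ m) \<circ> (f ^^ n)"
  by (metis funpow_comm)

locale skw =
  fixes s1 s2 :: "'a::division_ring \<Rightarrow> 'a"
  assumes a1: "ring_aut s1" and a2: "ring_aut s2" and cm: "s1 \<circ> s2 = s2 \<circ> s1"
begin

abbreviation T where "T \<equiv> skew_poly2 s1 s2"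

definition sg :: "nat \<Rightarrow> nat \<Rightarrow> 'a \<Rightarrow> 'a" where
  "sg i j = (s1 ^^ i) \<circ> (s2 ^^ j)"

lemma sg_aut: "ring_aut (sg i j)"
  unfolding sg_def by (intro ring_aut_comp ring_aut_pow a1 a2)

lemma sg_comp: "sg k l (sg a b x) = sg (k+a) (l+b) x"
proof -
  have "(s2 ^^ l) \<circ> (s1 ^^ a) = (s1 ^^ a) \<circ> (s2 ^^ l)" using funpow_comm2[OF cm] by metis
  hence "(s2 ^^ l) ((s1 ^^ a) y) = (s1 ^^ a) ((s2 ^^ l) y)" for y by (metis comp_apply)
  thus ?thesis unfolding sg_def by (simp add: funpow_add)
qed

lemma sg0 [simp]: "sg 0 0 x = x" by (simp add: sg_def)

lemma carrierT: "carrier T = {f. finite {m. f m \<noteq> 0}}" by (simp add: skew_poly2_def)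
lemma zeroT: "\<zero>\<^bsub>T\<^esub> = (\<lambda>m. 0)" by (simp add: skew_poly2_def)
lemma oneT: "\<one>\<^bsub>T\<^esub> = (\<lambda>m. if m = (0,0) then 1 else 0)" by (simp add: skew_poly2_def)
lemma addT: "f \<oplus>\<^bsub>T\<^esub> g = (\<lambda>m. f m + g m)" by (simp add: skew_poly2_def)

lemma multT: "(f \<otimes>\<^bsub>T\<^esub> g) (p,q) = (\<Sum>i\<le>p. \<Sum>j\<le>q. f (i,j) * sg i j (g (p-i,q-j)))"
proof -
  have "(f \<otimes>\<^bsub>T\<^esub> g) (p,q) = (\<Sum>(i, j)\<in>{0..p} \<times> {0..q}. f (i, j) * (s1 ^^ i) ((s2 ^^ j) (g (p - i, q - j))))"
    by (simp add: skew_poly2_def)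
  also have "\<dots> = (\<Sum>i\<le>p. \<Sum>j\<le>q. f (i,j) * sg i j (g (p-i,q-j)))"
    by (simp add: sum.cartesian_product atLeast0AtMost sg_def)
  finally show ?thesis .
qed

lemma multT_assoc: "(f \<otimes>\<^bsub>T\<^esub> g) \<otimes>\<^bsub>T\<^esub> h = f \<otimes>\<^bsub>T\<^esub> (g \<otimes>\<^bsub>T\<^esub> h)"
proof
  fix m :: "nat \<times> nat"
  obtain p q where m: "m = (p,q)" by (cases m)
  define F where "F k l a b c d = f (k,l) * sg k l (g (a,b)) * sg (k+a) (l+b) (h (c,d))" for k l a b c d
  have "((f \<otimes>\<^bsub>T\<^esub> g) \<otimes>\<^bsub>T\<^esub> h) (p,q) =
     (\<Sum>i\<le>p. \<Sum>j\<le>q. (\<Sum>k\<le>i. \<Sum>l\<le>j. f (k,l) * sg k l (g (i-k,j-l))) * sg i j (h (p-i,q-j)))"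
    by (simp add: multT)
  also have "\<dots> = (\<Sum>i\<le>p. \<Sum>j\<le>q. \<Sum>k\<le>i. \<Sum>l\<le>j. F k l (i-k) (j-l) (p-i) (q-j))"
    unfolding F_def by (intro sum.cong refl) (simp add: sum_distrib_right)
  also have "\<dots> = (\<Sum>k\<le>p. \<Sum>l\<le>q. \<Sum>a\<le>p-k. \<Sum>b\<le>q-l. F k l a b (p-k-a) (q-l-b))"
    by (rule conv2)
  also have "\<dots> = (f \<otimes>\<^bsub>T\<^esub> (g \<otimes>\<^bsub>T\<^esub> h)) (p,q)"
    unfolding F_def multT
    by (intro sum.cong refl)
       (simp add: sum_distrib_left ring_aut_sum[OF sg_aut] ring_aut_mult[OF sg_aut] sg_comp mult.assoc)
  finally show "((f \<otimes>\<^bsub>T\<^esub> g) \<otimes>\<^bsub>T\<^esub> h) m = (f \<otimes>\<^bsub>T\<^esub> (g \<otimes>\<^bsub>T\<^esub> h)) m" by (simp add: m)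
qed

end

definition mon :: "'a::zero \<Rightarrow> nat \<times> nat \<Rightarrow> nat \<times> nat \<Rightarrow> 'a" where
  "mon x m = (\<lambda>m'. if m' = m then x else 0)"

fun ax :: "bool \<Rightarrow> nat \<Rightarrow> nat \<times> nat" where
  "ax True n = (n,0)" | "ax False n = (0,n)"

lemma ax0 [simp]: "ax b 0 = (0,0)" by (cases b) auto
lemma ax_inj [simp]: "(ax b n = ax b k) = (n = k)" by (cases b) auto
lemma ax_other: "(ax b n = ax (\<not>b) k) = (n = 0 \<and> k = 0)" by (cases b) auto

lemma sum2_delta:
  fixes c :: "'b::comm_monoid_add" and p q a b :: nat
  shows "(\<Sum>i\<le>p. \<Sum>j\<le>q. if i = a \<and> j = b then c else 0) = (if a \<le> p \<and> b \<le> q then c else 0)"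
proof -
  have "(\<Sum>i\<le>p. \<Sum>j\<le>q. if i = a \<and> j = b then c else 0) = (\<Sum>i\<le>p. if i = a then (\<Sum>j\<le>q. if j = b then c else 0) else 0)"
    by (intro sum.cong refl) auto
  also have "\<dots> = (\<Sum>i\<le>p. if i = a then (if b \<le> q then c else 0) else 0)"
    by (intro sum.cong refl) simp
  also have "\<dots> = (if a \<le> p \<and> b \<le> q then c else 0)"
    by simp
  finally show ?thesis .
qed

context skw begin

definition sgb :: "bool \<Rightarrow> nat \<Rightarrow> 'a \<Rightarrow> 'a" where
  "sgb b k = (if b then sg k 0 else sg 0 k)"
lemma sgb_aut: "ring_aut (sgb b k)" by (simp add: sgb_def sg_aut)
lemma sgb0 [simp]: "sgb b 0 x = x" by (simp add: sgb_def)

lemma multT_ax: "(f \<otimes>\<^bsub>T\<^esub> g) (ax b n) = (\<Sum>k\<le>n. f (ax b k) * sgb b k (g (ax b (n-k))))"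
  by (cases b) (simp_all add: multT sgb_def)

lemma mono_multT: "(mon x (a,b) \<otimes>\<^bsub>T\<^esub> g) (p,q) = (if a \<le> p \<and> b \<le> q then x * sg a b (g (p-a,q-b)) else 0)"
proof -
  have "(mon x (a,b) \<otimes>\<^bsub>T\<^esub> g) (p,q) = (\<Sum>i\<le>p. \<Sum>j\<le>q. if i = a \<and> j = b then x * sg a b (g (p-a,q-b)) else 0)"
    unfolding multT mon_def by (intro sum.cong refl) auto
  also have "\<dots> = (if a \<le> p \<and> b \<le> q then x * sg a b (g (p-a,q-b)) else 0)"
    by (rule sum2_delta)
  finally show ?thesis .
qed

lemma multT_mono: "(g \<otimes>\<^bsub>T\<^esub> mon x (a,b)) (p,q) = (if a \<le> p \<and> b \<le> q then g (p-a,q-b) * sg (p-a) (q-b) x else 0)"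
proof -
  have "(g \<otimes>\<^bsub>T\<^esub> mon x (a,b)) (p,q) = (\<Sum>i\<le>p. \<Sum>j\<le>q. if i = p - a \<and> j = q - b then (if a \<le> p \<and> b \<le> q then g (p-a,q-b) * sg (p-a) (q-b) x else 0) else 0)"
    unfolding multT mon_def using sg_aut
    by (intro sum.cong refl) (auto simp: ring_aut_zero)
  also have "\<dots> = (if a \<le> p \<and> b \<le> q then g (p-a,q-b) * sg (p-a) (q-b) x else 0)"
    by (subst sum2_delta) auto
  finally show ?thesis .
qed

lemma oneT_mono: "\<one>\<^bsub>T\<^esub> = mon 1 (0,0)" by (simp add: oneT mon_def)

lemma supp_mult: "{m. (f \<otimes>\<^bsub>T\<^esub> g) m \<noteq> 0} \<subseteq> (\<lambda>(x,y). (fst x + fst y, snd x + snd y)) ` ({m. f m \<noteq> 0} \<times> {m. g m \<noteq> 0})"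
proof
  fix m assume "m \<in> {m. (f \<otimes>\<^bsub>T\<^esub> g) m \<noteq> 0}"
  then obtain p q where m: "m = (p,q)" and ne: "(f \<otimes>\<^bsub>T\<^esub> g) (p,q) \<noteq> 0" by (cases m) auto
  from ne obtain i j where ij: "i \<le> p" "j \<le> q" "f (i,j) * sg i j (g (p-i,q-j)) \<noteq> 0"
    unfolding multT by (metis (no_types, lifting) atMost_iff sum.neutral)
  hence "f (i,j) \<noteq> 0" "g (p-i,q-j) \<noteq> 0" using ring_aut_zero[OF sg_aut] by auto
  thus "m \<in> (\<lambda>(x,y). (fst x + fst y, snd x + snd y)) ` ({m. f m \<noteq> 0} \<times> {m. g m \<noteq> 0})"
    using ij m by (intro image_eqI[where x="((i,j),(p-i,q-j))"]) auto
qed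

lemma mult_closedT: "f \<in> carrier T \<Longrightarrow> g \<in> carrier T \<Longrightarrow> f \<otimes>\<^bsub>T\<^esub> g \<in> carrier T"
  unfolding carrierT using supp_mult[of f g] by (simp, metis (no_types, lifting) finite_SigmaI finite_imageI finite_subset)

lemma ringT: "ring T"
proof (rule ringI)
  show "abelian_group T"
  proof (rule abelian_groupI)
    fix x y assume "x \<in> carrier T" "y \<in> carrier T"
    thus "x \<oplus>\<^bsub>T\<^esub> y \<in> carrier T" unfolding carrierT addT
      by (auto intro: finite_subset[of _ "{m. x m \<noteq> 0} \<union> {m. y m \<noteq> 0}"])
  next
    show "\<zero>\<^bsub>T\<^esub> \<in> carrier T" by (simp add: carrierT zeroT)
  next
    fix x y z show "x \<oplus>\<^bsub>T\<^esub> y \<oplus>\<^bsub>T\<^esub> z = x \<oplus>\<^bsub>T\<^esub> (y \<oplus>\<^bsub>T\<^esub> z)" by (simp add: addT add.assoc)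
  next
    fix x y show "x \<oplus>\<^bsub>T\<^esub> y = y \<oplus>\<^bsub>T\<^esub> x" by (simp add: addT add.commute)
  next
    fix x show "\<zero>\<^bsub>T\<^esub> \<oplus>\<^bsub>T\<^esub> x = x" by (simp add: addT zeroT)
  next
    fix x assume "x \<in> carrier T"
    thus "\<exists>y\<in>carrier T. y \<oplus>\<^bsub>T\<^esub> x = \<zero>\<^bsub>T\<^esub>"
      by (intro bexI[where x="\<lambda>m. - x m"]) (auto simp: addT zeroT carrierT)
  qed
next
  show "monoid T"
  proof (rule monoidI)
    fix x y assume "x \<in> carrier T" "y \<in> carrier T"
    thus "x \<otimes>\<^bsub>T\<^esub> y \<in> carrier T" by (rule mult_closedT)
  next
    show "\<one>\<^bsub>T\<^esub> \<in> carrier T" by (simp add: carrierT oneT)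
  next
    fix x y z show "x \<otimes>\<^bsub>T\<^esub> y \<otimes>\<^bsub>T\<^esub> z = x \<otimes>\<^bsub>T\<^esub> (y \<otimes>\<^bsub>T\<^esub> z)" by (rule multT_assoc)
  next
    fix x show "\<one>\<^bsub>T\<^esub> \<otimes>\<^bsub>T\<^esub> x = x"
      unfolding oneT_mono by (rule ext, case_tac xa) (simp add: mono_multT)
  next
    fix x show "x \<otimes>\<^bsub>T\<^esub> \<one>\<^bsub>T\<^esub> = x"
      unfolding oneT_mono by (rule ext, case_tac xa) (simp add: multT_mono ring_aut_one[OF sg_aut])
  qed
next
  fix x y z
  show "(x \<oplus>\<^bsub>T\<^esub> y) \<otimes>\<^bsub>T\<^esub> z = x \<otimes>\<^bsub>T\<^esub> z \<oplus>\<^bsub>T\<^esub> y \<otimes>\<^bsub>T\<^esub> z"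
    by (rule ext, case_tac xa) (simp add: multT addT distrib_right sum.distrib)
  show "z \<otimes>\<^bsub>T\<^esub> (x \<oplus>\<^bsub>T\<^esub> y) = z \<otimes>\<^bsub>T\<^esub> x \<oplus>\<^bsub>T\<^esub> z \<otimes>\<^bsub>T\<^esub> y"
    by (rule ext, case_tac xa) (simp add: multT addT distrib_left sum.distrib ring_aut_add[OF sg_aut])
qed

end

lemma ax_ne11: "ax b n \<noteq> (Suc p, Suc q)" by (cases b) auto

context skw begin

interpretation R: ring T by (rule ringT)

lemma a_invT: "f \<in> carrier T \<Longrightarrow> \<ominus>\<^bsub>T\<^esub> f = (\<lambda>m. - f m)"
  by (rule R.minus_equality) (auto simp: addT zeroT carrierT)

lemma a_minusT: "f \<in> carrier T \<Longrightarrow> g \<in> carrier T \<Longrightarrow> f \<ominus>\<^bsub>T\<^esub> g = (\<lambda>m. f m - g m)"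
  by (simp add: a_minus_def a_invT addT)

lemma finsum_evalT: "F \<in> A \<rightarrow> carrier T \<Longrightarrow> (finsum T F A) m = (\<Sum>x\<in>A. F x m)"
proof (induct A rule: infinite_finite_induct)
  case (infinite A) thus ?case by (simp add: zeroT)
next
  case empty thus ?case by (simp add: zeroT)
next
  case (insert x A) thus ?case by (simp add: R.finsum_insert addT)
qed

lemma mono_carrier: "mon x m \<in> carrier T"
  unfolding carrierT mon_def mem_Collect_eq by (rule finite_subset[where B="{m}"]) auto

lemma decompT: "f \<in> carrier T \<Longrightarrow> finsum T (\<lambda>m. mon (f m) m) {m. f m \<noteq> 0} = f"
proof
  fix m' assume f: "f \<in> carrier T"
  have "finsum T (\<lambda>m. mon (f m) m) {m. f m \<noteq> 0} m' = (\<Sum>m\<in>{m. f m \<noteq> 0}. if m' = m then f m else 0)"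
    by (subst finsum_evalT, simp add: mono_carrier) (simp add: mon_def)
  also have "\<dots> = f m'" using f by (simp add: carrierT)
  finally show "finsum T (\<lambda>m. mon (f m) m) {m. f m \<noteq> 0} m' = f m'" .
qed

definition J where "J = {f \<in> carrier T. \<forall>b n. f (ax b n) = 0}"

lemma ideal_J: "ideal J T"
proof (rule idealI)
  show "ring T" by (rule ringT)
  show "subgroup J (add_monoid T)"
  proof (rule subgroup.intro)
    show "J \<subseteq> carrier (add_monoid T)" by (auto simp: J_def)
    fix x y assume "x \<in> J" "y \<in> J"
    thus "x \<otimes>\<^bsub>add_monoid T\<^esub> y \<in> J" unfolding J_def using R.add.m_closed by (auto simp: addT)
  next
    show "\<one>\<^bsub>add_monoid T\<^esub> \<in> J" by (auto simp: J_def zeroT carrierT)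
  next
    fix x assume "x \<in> J"
    have "inv\<^bsub>add_monoid T\<^esub> x = \<ominus>\<^bsub>T\<^esub> x" by (simp add: a_inv_def)
    thus "inv\<^bsub>add_monoid T\<^esub> x \<in> J" using \<open>x \<in> J\<close> unfolding J_def using R.a_inv_closed
      by (auto simp: a_invT)
  qed
next
  fix a x assume "a \<in> J" "x \<in> carrier T"
  thus "x \<otimes>\<^bsub>T\<^esub> a \<in> J" unfolding J_def using R.m_closed
    by (auto simp: multT_ax ring_aut_zero[OF sgb_aut])
next
  fix a x assume "a \<in> J" "x \<in> carrier T"
  thus "a \<otimes>\<^bsub>T\<^esub> x \<in> J" unfolding J_def using R.m_closed
    by (auto simp: multT_ax ring_aut_zero[OF sgb_aut])
qed

lemma var1_mono: "skew_var1 = mon 1 (1,0)" by (simp add: skew_var1_def mon_def fun_eq_iff)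
lemma var2_mono: "skew_var2 = mon 1 (0,1)" by (simp add: skew_var2_def mon_def fun_eq_iff)
lemma const_mono: "skew_const a = mon a (0,0)" by (simp add: skew_const_def mon_def fun_eq_iff)

lemma t1t2: "skew_var1 \<otimes>\<^bsub>T\<^esub> skew_var2 = mon 1 (1,1)"
  by (auto simp: fun_eq_iff var1_mono var2_mono multT_mono ring_aut_one[OF sg_aut])
     (auto simp: mon_def)

lemma mono_mult11: "mon x (p,q) \<otimes>\<^bsub>T\<^esub> mon 1 (1,1) = mon x (Suc p, Suc q)"
  by (auto simp: fun_eq_iff multT_mono ring_aut_one[OF sg_aut])
     (auto simp: mon_def)

abbreviation I where "I \<equiv> ideal_t1t2 s1 s2"

lemma I_eq: "I = J"
proof
  have gen: "skew_var1 \<otimes>\<^bsub>T\<^esub> skew_var2 \<in> carrier T"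
    by (simp add: t1t2 mono_carrier)
  show "I \<subseteq> J" unfolding ideal_t1t2_def
  proof (rule R.genideal_minimal[OF ideal_J])
    have "mon 1 (1,1) (ax b n) = 0" for b n using ax_ne11[of b n 0 0] by (simp add: mon_def)
    thus "{skew_var1 \<otimes>\<^bsub>T\<^esub> skew_var2} \<subseteq> J" unfolding J_def t1t2 using mono_carrier by blast
  qed
  have idI: "ideal I T" unfolding ideal_t1t2_def by (rule R.genideal_ideal) (use gen in auto)
  have tI: "mon 1 (1,1) \<in> I" unfolding ideal_t1t2_def using R.genideal_self'[OF gen] t1t2 by simp
  have monI: "mon x m \<in> I" if "m \<noteq> ax True (fst m)" "m \<noteq> ax False (snd m)" for x m
  proof -
    obtain p0 q0 where m0: "m = (p0,q0)" by (cases m)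
    hence "p0 \<noteq> 0" "q0 \<noteq> 0" using that by auto
    then obtain p q where m: "m = (Suc p, Suc q)" using m0 not0_implies_Suc by blast
    have "mon x m = mon x (p,q) \<otimes>\<^bsub>T\<^esub> mon 1 (1,1)" unfolding m by (rule mono_mult11[symmetric])
    thus ?thesis using ideal.I_l_closed[OF idI tI mono_carrier] by simp
  qed
  show "J \<subseteq> I"
  proof
    fix f assume fJ: "f \<in> J"
    hence f: "f \<in> carrier T" by (simp add: J_def)
    have fin: "finite {m. f m \<noteq> 0}" using f by (simp add: carrierT)
    have "finsum T (\<lambda>m. mon (f m) m) A \<in> I" if "A \<subseteq> {m. f m \<noteq> 0}" for A
      using finite_subset[OF that fin] that
    proof (induct A rule: finite_induct)
      case empty thus ?case using additive_subgroup.zero_closed[OF ideal.axioms(1)[OF idI]] by simp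
    next
      case (insert x A)
      have "mon (f x) x \<in> I"
      proof (rule monI)
        have fx: "f x \<noteq> 0" using insert.prems by auto
        have h0: "f (ax b n) = 0" for b n using fJ unfolding J_def by auto
        show "x \<noteq> ax True (fst x)"
        proof
          assume e: "x = ax True (fst x)"
          have "f x = f (ax True (fst x))" by (rule arg_cong[where f=f, OF e])
          thus False using h0[of True "fst x"] fx by simp
        qed
        show "x \<noteq> ax False (snd x)"
        proof
          assume e: "x = ax False (snd x)"
          have "f x = f (ax False (snd x))" by (rule arg_cong[where f=f, OF e])
          thus False using h0[of False "snd x"] fx by simp
        qed
      qed
      moreover have eqi: "finsum T (\<lambda>m. mon (f m) m) (insert x A) = mon (f x) x \<oplus>\<^bsub>T\<^esub> finsum T (\<lambda>m. mon (f m) m) A"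
        by (rule R.finsum_insert) (use insert.hyps in \<open>simp_all add: mono_carrier Pi_def\<close>)
      moreover have "finsum T (\<lambda>m. mon (f m) m) A \<in> I" using insert.hyps(3) insert.prems by blast
      ultimately show ?case unfolding eqi
        by (intro additive_subgroup.a_closed[OF ideal.axioms(1)[OF idI]])
    qed
    from this[OF order_refl] show "f \<in> I" unfolding decompT[OF f] .
  qed
qed

end

context skw begin

interpretation R: ring T by (rule ringT)

abbreviation S where "S \<equiv> S_ring s1 s2"
definition pi where "pi f = I +>\<^bsub>T\<^esub> f"

lemma idI: "ideal I T"
  unfolding I_eq by (rule ideal_J)

lemma ringS: "ring S"
  unfolding S_ring_def by (rule ideal.quotient_is_ring[OF idI])

interpretation RS: ring S by (rule ringS)

lemma homS: "ring_hom_ring T S pi"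
  unfolding S_ring_def pi_def by (rule ideal.rcos_ring_hom_ring[OF idI])

interpretation H: ring_hom_ring T S pi by (rule homS)

lemma pi_eq: "f \<in> carrier T \<Longrightarrow> g \<in> carrier T \<Longrightarrow> (pi f = pi g) = (\<forall>b n. f (ax b n) = g (ax b n))"
proof -
  assume f: "f \<in> carrier T" and g: "g \<in> carrier T"
  have "(pi f = pi g) = (f \<ominus>\<^bsub>T\<^esub> g \<in> I)"
    unfolding pi_def using R.quotient_eq_iff_same_a_r_cos[OF idI f g] by simp
  also have "\<dots> = ((\<lambda>m. f m - g m) \<in> J)" unfolding I_eq a_minusT[OF f g] ..
  also have "\<dots> = (\<forall>b n. f (ax b n) = g (ax b n))"
    using R.minus_closed[OF f g] unfolding J_def a_minusT[OF f g] by auto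
  finally show ?thesis .
qed

lemma carrierS: "carrier S = pi ` carrier T"
  unfolding S_ring_def FactRing_def pi_def A_RCOSETS_def' by auto

lemma embS: "S_emb s1 s2 a = pi (mon a (0,0))"
  by (simp add: S_emb_def pi_def const_mono)

lemma const_mult: "(mon x (0,0) \<otimes>\<^bsub>T\<^esub> g) m = x * g m"
  by (cases m) (simp add: mono_multT)

lemma mult_const: "(g \<otimes>\<^bsub>T\<^esub> mon x (0,0)) (ax b n) = g (ax b n) * sgb b n x"
  by (cases b) (simp_all add: multT_mono sgb_def)

lemma pi_finsum: "F \<in> A \<rightarrow> carrier T \<Longrightarrow> pi (finsum T F A) = finsum S (pi \<circ> F) A"
proof (induct A rule: infinite_finite_induct)
  case (infinite A) thus ?case by (simp add: H.hom_zero)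
next
  case empty thus ?case by (simp add: H.hom_zero)
next
  case (insert x A)
  have "pi \<circ> F \<in> A \<rightarrow> carrier S" using insert.prems by (auto intro!: H.hom_closed)
  have e1: "finsum S (pi \<circ> F) (insert x A) = (pi \<circ> F) x \<oplus>\<^bsub>S\<^esub> finsum S (pi \<circ> F) A"
    by (rule RS.finsum_insert) (use insert \<open>pi \<circ> F \<in> A \<rightarrow> carrier S\<close> in \<open>auto intro: H.hom_closed\<close>)
  have e2: "finsum T F (insert x A) = F x \<oplus>\<^bsub>T\<^esub> finsum T F A"
    by (rule R.finsum_insert) (use insert in auto)
  show ?case unfolding e1 e2 using insert by (simp add: H.hom_add R.finsum_closed)
qed

end

lemma funpow_inv_cancel: "bij (s::'a \<Rightarrow> 'a) \<Longrightarrow> (s ^^ q) ((inv_into UNIV s ^^ q) r) = r"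
proof (induct q arbitrary: r)
  case 0 show ?case by simp
next
  case (Suc q)
  have "(s ^^ Suc q) ((inv_into UNIV s ^^ Suc q) r) = (s ^^ q) (s (inv_into UNIV s ((inv_into UNIV s ^^ q) r)))"
  proof -
    have e1: "(s ^^ Suc q) = (s ^^ q) \<circ> s" by (rule funpow_Suc_right)
    have e2: "(inv_into UNIV s ^^ Suc q) = inv_into UNIV s \<circ> (inv_into UNIV s ^^ q)" by simp
    show ?thesis unfolding e1 e2 by simp
  qed
  also have "s (inv_into UNIV s ((inv_into UNIV s ^^ q) r)) = (inv_into UNIV s ^^ q) r"
    using Suc.prems by (simp add: bij_def f_inv_into_f)
  finally show ?case using Suc by simp
qed

lemma inner_lemma:
  fixes s1 s2 :: "'a::division_ring \<Rightarrow> 'a"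
  assumes b2: "bij s2" and x: "x \<noteq> 0" and y: "y \<noteq> 0"
    and h1: "\<And>b. (s1 ^^ p) b = x * \<tau> b * inverse x"
    and h2: "\<And>b. (s2 ^^ q) b = y * \<tau> b * inverse y"
  shows "inner_aut ((s1 ^^ p) \<circ> (inv_into UNIV s2 ^^ q))"
  unfolding inner_aut_def
proof (intro exI[where x="x * inverse y"] conjI allI)
  show "x * inverse y \<noteq> 0" using x y by simp
  fix r
  define b where "b = (inv_into UNIV s2 ^^ q) r"
  have "r = y * \<tau> b * inverse y" using funpow_inv_cancel[OF b2, of q r] h2[of b] by (simp add: b_def)
  hence "inverse y * r * y = (inverse y * y) * \<tau> b * (inverse y * y)" by (simp add: mult.assoc)
  hence tb: "\<tau> b = inverse y * r * y" using y by simp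
  have "((s1 ^^ p) \<circ> (inv_into UNIV s2 ^^ q)) r = x * (inverse y * r * y) * inverse x"
    using h1[of b] tb by (simp add: b_def)
  also have "\<dots> = x * inverse y * r * inverse (x * inverse y)"
    using x y by (simp add: nonzero_inverse_mult_distrib mult.assoc)
  finally show "((s1 ^^ p) \<circ> (inv_into UNIV s2 ^^ q)) r = x * inverse y * r * inverse (x * inverse y)" .
qed

context skw begin

interpretation R: ring T by (rule ringT)
interpretation RS: ring S by (rule ringS)
interpretation H: ring_hom_ring T S pi by (rule homS)

lemma aut_coef:
  assumes f: "f \<in> carrier T" and e: "pi f \<otimes>\<^bsub>S\<^esub> S_emb s1 s2 b = S_emb s1 s2 c \<otimes>\<^bsub>S\<^esub> pi f"
  shows "f (ax \<beta> n) * sgb \<beta> n b = c * f (ax \<beta> n)"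
proof -
  have "pi (f \<otimes>\<^bsub>T\<^esub> mon b (0,0)) = pi (mon c (0,0) \<otimes>\<^bsub>T\<^esub> f)"
    using e f by (simp add: embS mono_carrier)
  hence "(f \<otimes>\<^bsub>T\<^esub> mon b (0,0)) (ax \<beta> n) = (mon c (0,0) \<otimes>\<^bsub>T\<^esub> f) (ax \<beta> n)"
    using f by (subst (asm) pi_eq) (auto intro: R.m_closed mono_carrier)
  thus ?thesis by (simp add: mult_const const_mult)
qed

definition Rb where "Rb \<beta> = {s. \<exists>g\<in>carrier T. s = pi g \<and> (\<forall>k\<ge>1. g (ax \<beta> k) = 0)}"

lemma subring_Rb: "subring (Rb \<beta>) S"
proof (rule RS.subringI)
  show "Rb \<beta> \<subseteq> carrier S" unfolding Rb_def using H.hom_closed by auto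
  have "ax \<beta> k \<noteq> (0,0)" if "k \<ge> 1" for k using that by (cases \<beta>) auto
  hence "\<forall>k\<ge>1. \<one>\<^bsub>T\<^esub> (ax \<beta> k) = 0" by (simp add: oneT)
  thus "\<one>\<^bsub>S\<^esub> \<in> Rb \<beta>" unfolding Rb_def using H.hom_one R.one_closed by blast
next
  fix h assume "h \<in> Rb \<beta>"
  then obtain g where g: "g \<in> carrier T" "h = pi g" "\<forall>k\<ge>1. g (ax \<beta> k) = 0" unfolding Rb_def by auto
  have "\<ominus>\<^bsub>S\<^esub> h = pi (\<ominus>\<^bsub>T\<^esub> g)" using g by (simp add: H.hom_a_inv)
  moreover have "\<ominus>\<^bsub>T\<^esub> g \<in> carrier T" using g by simp
  moreover have "\<forall>k\<ge>1. (\<ominus>\<^bsub>T\<^esub> g) (ax \<beta> k) = 0" using g by (simp add: a_invT)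
  ultimately show "\<ominus>\<^bsub>S\<^esub> h \<in> Rb \<beta>" unfolding Rb_def by blast
next
  fix h1 h2 assume "h1 \<in> Rb \<beta>" "h2 \<in> Rb \<beta>"
  then obtain g1 g2 where g1: "g1 \<in> carrier T" "h1 = pi g1" "\<forall>k\<ge>1. g1 (ax \<beta> k) = 0"
    and g2: "g2 \<in> carrier T" "h2 = pi g2" "\<forall>k\<ge>1. g2 (ax \<beta> k) = 0" unfolding Rb_def by auto
  have "h1 \<oplus>\<^bsub>S\<^esub> h2 = pi (g1 \<oplus>\<^bsub>T\<^esub> g2)" using g1 g2 by (simp add: H.hom_add)
  moreover have "g1 \<oplus>\<^bsub>T\<^esub> g2 \<in> carrier T" using g1 g2 by simp
  moreover have "\<forall>k\<ge>1. (g1 \<oplus>\<^bsub>T\<^esub> g2) (ax \<beta> k) = 0" using g1 g2 by (simp add: addT)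
  ultimately show "h1 \<oplus>\<^bsub>S\<^esub> h2 \<in> Rb \<beta>" unfolding Rb_def by blast
  have "(g1 \<otimes>\<^bsub>T\<^esub> g2) (ax \<beta> k) = 0" if "k \<ge> 1" for k
    unfolding multT_ax
  proof (rule sum.neutral, rule ballI)
    fix j assume "j \<in> {..k}"
    show "g1 (ax \<beta> j) * sgb \<beta> j (g2 (ax \<beta> (k - j))) = 0"
    proof (cases "j = 0")
      case True thus ?thesis using g2 that by simp
    next
      case False thus ?thesis using g1 by simp
    qed
  qed
  thus "h1 \<otimes>\<^bsub>S\<^esub> h2 \<in> Rb \<beta>" unfolding Rb_def
    by (intro CollectI bexI[where x="g1 \<otimes>\<^bsub>T\<^esub> g2"]) (use g1 g2 in auto)
qed

lemma deg_contra:
  assumes Ffin: "finite F" and Fc: "F \<subseteq> carrier S" and Gc: "G \<subseteq> carrier S" and GR: "G \<subseteq> Rb \<beta>"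
    and gen: "\<forall>s\<in>carrier S. \<exists>r. (\<forall>f\<in>F. r f \<in> generate_ring S G) \<and> s = finsum S (\<lambda>f. r f \<otimes>\<^bsub>S\<^esub> f) F"
  shows False
proof -
  have GRsub: "generate_ring S G \<subseteq> Rb \<beta>"
    by (rule RS.generate_ring_min_subring1[OF Gc subring_Rb GR])
  have "\<forall>f\<in>F. \<exists>h. h \<in> carrier T \<and> f = pi h" using Fc carrierS by auto
  then obtain h where h: "\<And>f. f \<in> F \<Longrightarrow> h f \<in> carrier T \<and> f = pi (h f)" by metis
  define X where "X = (\<Union>f\<in>F. {k. h f (ax \<beta> k) \<noteq> 0})"
  have "finite X" unfolding X_def
  proof (rule finite_UN_I[OF Ffin])
    fix f assume "f \<in> F"
    hence "finite {m. h f m \<noteq> 0}" using h carrierT by auto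
    hence "finite (ax \<beta> -` {m. h f m \<noteq> 0})" by (rule finite_vimageI) (simp add: inj_on_def)
    thus "finite {k. h f (ax \<beta> k) \<noteq> 0}" by (simp add: vimage_def)
  qed
  then obtain N0 where N0: "\<forall>k\<in>X. k < N0" using finite_nat_bounded by blast
  define N where "N = Suc N0"
  have hN: "h f (ax \<beta> N) = 0" if "f \<in> F" for f using N0 that unfolding X_def N_def by fastforce
  have sc: "pi (mon 1 (ax \<beta> N)) \<in> carrier S" by (rule H.hom_closed[OF mono_carrier])
  then obtain r where r: "\<forall>f\<in>F. r f \<in> generate_ring S G"
    and rs: "pi (mon 1 (ax \<beta> N)) = finsum S (\<lambda>f. r f \<otimes>\<^bsub>S\<^esub> f) F" using gen by blast
  have "\<forall>f\<in>F. \<exists>g. g \<in> carrier T \<and> r f = pi g \<and> (\<forall>k\<ge>1. g (ax \<beta> k) = 0)"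
    using r GRsub unfolding Rb_def by blast
  then obtain g where g: "\<And>f. f \<in> F \<Longrightarrow> g f \<in> carrier T \<and> r f = pi (g f) \<and> (\<forall>k\<ge>1. g f (ax \<beta> k) = 0)"
    by metis
  have Pc: "(\<lambda>f. g f \<otimes>\<^bsub>T\<^esub> h f) \<in> F \<rightarrow> carrier T" using g h by (auto intro: R.m_closed)
  have "finsum S (\<lambda>f. r f \<otimes>\<^bsub>S\<^esub> f) F = finsum S (pi \<circ> (\<lambda>f. g f \<otimes>\<^bsub>T\<^esub> h f)) F"
  proof (rule RS.finsum_cong')
    show "pi \<circ> (\<lambda>f. g f \<otimes>\<^bsub>T\<^esub> h f) \<in> F \<rightarrow> carrier S"
    proof
      fix f assume "f \<in> F"
      hence "g f \<otimes>\<^bsub>T\<^esub> h f \<in> carrier T" using Pc by blast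
      thus "(pi \<circ> (\<lambda>f. g f \<otimes>\<^bsub>T\<^esub> h f)) f \<in> carrier S" by (simp add: H.hom_closed)
    qed
    fix f assume "f \<in> F"
    thus "r f \<otimes>\<^bsub>S\<^esub> f = (pi \<circ> (\<lambda>f. g f \<otimes>\<^bsub>T\<^esub> h f)) f" using g h by simp
  qed simp
  also have "\<dots> = pi (finsum T (\<lambda>f. g f \<otimes>\<^bsub>T\<^esub> h f) F)" by (rule pi_finsum[OF Pc, symmetric])
  finally have "pi (mon 1 (ax \<beta> N)) = pi (finsum T (\<lambda>f. g f \<otimes>\<^bsub>T\<^esub> h f) F)" using rs by simp
  hence "mon 1 (ax \<beta> N) (ax \<beta> N) = (finsum T (\<lambda>f. g f \<otimes>\<^bsub>T\<^esub> h f) F) (ax \<beta> N)"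
    using pi_eq[OF mono_carrier R.finsum_closed[OF Pc]] by blast
  also have "\<dots> = (\<Sum>f\<in>F. (g f \<otimes>\<^bsub>T\<^esub> h f) (ax \<beta> N))" by (rule finsum_evalT[OF Pc])
  also have "\<dots> = 0"
  proof (rule sum.neutral, rule ballI)
    fix f assume f: "f \<in> F"
    show "(g f \<otimes>\<^bsub>T\<^esub> h f) (ax \<beta> N) = 0" unfolding multT_ax
    proof (rule sum.neutral, rule ballI)
      fix j assume "j \<in> {..N}"
      show "g f (ax \<beta> j) * sgb \<beta> j (h f (ax \<beta> (N - j))) = 0"
      proof (cases "j = 0")
        case True thus ?thesis using hN[OF f] by (simp add: ring_aut_zero[OF sgb_aut])
      next
        case False thus ?thesis using g[OF f] by simp
      qed
    qed
  qed
  finally show False by (simp add: mon_def)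
qed

end

lemma mon_in_delta:
  assumes M: "monoid M" and a: "\<forall>l<k. a l \<in> carrier M"
  shows "monomial_in M a (\<lambda>x. if x = i then 1 else 0) k = (if i < k then a i else \<one>\<^bsub>M\<^esub>)"
  using a
proof (induct k)
  case 0 thus ?case by simp
next
  case (Suc k)
  have ak: "a k \<in> carrier M" using Suc.prems by simp
  have IH: "monomial_in M a (\<lambda>x. if x = i then 1 else 0) k = (if i < k then a i else \<one>\<^bsub>M\<^esub>)"
    using Suc by simp
  have ai: "i < k \<Longrightarrow> a i \<in> carrier M" using Suc.prems by simp
  show ?case
  proof (cases "k = i")
    case True thus ?thesis using IH ak by (simp add: monoid.l_one[OF M])
  next
    case False thus ?thesis using IH ak ai by (auto simp: monoid.r_one[OF M] monoid.one_closed[OF M])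
  qed
qed

lemma mon_in_delta2:
  assumes M: "monoid M" and a: "\<forall>l<k. a l \<in> carrier M" and ij: "i \<noteq> j"
    and comm: "i < k \<Longrightarrow> j < k \<Longrightarrow> a i \<otimes>\<^bsub>M\<^esub> a j = a j \<otimes>\<^bsub>M\<^esub> a i"
  shows "monomial_in M a (\<lambda>x. if x = i \<or> x = j then 1 else 0) k
     = (if i < k then a i else \<one>\<^bsub>M\<^esub>) \<otimes>\<^bsub>M\<^esub> (if j < k then a j else \<one>\<^bsub>M\<^esub>)"
  using a comm
proof (induct k)
  case 0 thus ?case by (simp add: monoid.l_one[OF M] monoid.one_closed[OF M])
next
  case (Suc k)
  have ak: "a k \<in> carrier M" using Suc.prems by simp
  have IH: "monomial_in M a (\<lambda>x. if x = i \<or> x = j then 1 else 0) k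
     = (if i < k then a i else \<one>\<^bsub>M\<^esub>) \<otimes>\<^bsub>M\<^esub> (if j < k then a j else \<one>\<^bsub>M\<^esub>)"
    using Suc by simp
  have ai: "i < k \<Longrightarrow> a i \<in> carrier M" and aj: "j < k \<Longrightarrow> a j \<in> carrier M" using Suc.prems by simp_all
  have c1: "(if i < k then a i else \<one>\<^bsub>M\<^esub>) \<in> carrier M" using ai monoid.one_closed[OF M] by simp
  have c2: "(if j < k then a j else \<one>\<^bsub>M\<^esub>) \<in> carrier M" using aj monoid.one_closed[OF M] by simp
  show ?case
  proof (cases "k = i")
    case True
    hence "j \<noteq> k" using ij by simp
    hence jj: "(j < Suc k) = (j < k)" by auto
    have cm: "(if j < k then a j else \<one>\<^bsub>M\<^esub>) \<otimes>\<^bsub>M\<^esub> a i = a i \<otimes>\<^bsub>M\<^esub> (if j < k then a j else \<one>\<^bsub>M\<^esub>)"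
      using Suc.prems(2)[of] True ak aj by (auto simp: monoid.l_one[OF M] monoid.r_one[OF M])
    show ?thesis using True IH ak c2 cm jj by (simp add: monoid.l_one[OF M])
  next
    case False note ki = False
    show ?thesis
    proof (cases "k = j")
      case True
      hence ii: "(i < Suc k) = (i < k)" using ki by auto
      show ?thesis using True ki IH ak c1 ii by (simp add: monoid.r_one[OF M] monoid.l_one[OF M] monoid.m_assoc[OF M])
    next
      case False
      hence "(i < Suc k) = (i < k)" "(j < Suc k) = (j < k)" using ki by auto
      thus ?thesis using False ki IH ak c1 c2 by (simp add: monoid.r_one[OF M] monoid.m_closed[OF M])
    qed
  qed
qed

lemma conj_solve: "(u::'a::division_ring) \<noteq> 0 \<Longrightarrow> u * z = w * u \<Longrightarrow> z = inverse u * w * u"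
proof -
  assume u: "u \<noteq> 0" and e: "u * z = w * u"
  have "z = inverse u * (u * z)" using u by (simp add: mult.assoc[symmetric])
  also have "\<dots> = inverse u * w * u" using e by (simp add: mult.assoc)
  finally show ?thesis .
qed

context skw begin

interpretation R: ring T by (rule ringT)
interpretation RS: ring S by (rule ringS)
interpretation H: ring_hom_ring T S pi by (rule homS)

lemma sgb_True: "sgb True n = s1 ^^ n" by (simp add: sgb_def sg_def)
lemma sgb_False: "sgb False n = s2 ^^ n" by (simp add: sgb_def sg_def)

lemma emb_one: "S_emb s1 s2 1 = \<one>\<^bsub>S\<^esub>"
  by (simp add: embS oneT_mono[symmetric])

lemma emb_neg: "S_emb s1 s2 (- x) = \<ominus>\<^bsub>S\<^esub> S_emb s1 s2 x"
proof -
  have "mon (-x) (0,0) = \<ominus>\<^bsub>T\<^esub> mon x (0,0)"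
    by (simp add: a_invT mono_carrier) (simp add: mon_def fun_eq_iff)
  thus ?thesis by (simp add: embS H.hom_a_inv mono_carrier)
qed

lemma emb_closed: "S_emb s1 s2 x \<in> carrier S"
  by (simp add: embS mono_carrier)

lemma dep_contra:
  fixes a :: "nat \<Rightarrow> (nat \<times> nat \<Rightarrow> 'a) set" and \<tau> :: "'a \<Rightarrow> 'a"
  assumes ij: "i < m" "j < m" "i \<noteq> j"
    and a: "\<forall>l<m. a l \<in> carrier S"
    and comm: "a i \<otimes>\<^bsub>S\<^esub> a j = a j \<otimes>\<^bsub>S\<^esub> a i"
    and aut: "\<And>b. a i \<otimes>\<^bsub>S\<^esub> S_emb s1 s2 b = S_emb s1 s2 (\<tau> b) \<otimes>\<^bsub>S\<^esub> a i"
    and indep: "\<forall>E c. finite E \<and> (\<forall>e\<in>E. \<forall>i\<ge>m. e i = 0)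
              \<and> finsum S (\<lambda>e. S_emb s1 s2 (c e) \<otimes>\<^bsub>S\<^esub> monomial_in S a e m) E = \<zero>\<^bsub>S\<^esub>
              \<longrightarrow> (\<forall>e\<in>E. c e = 0)"
    and fi: "fi \<in> carrier T" "a i = pi fi" "\<And>k. fi (ax (\<not>\<beta>) k) = 0"
    and fj: "fj \<in> carrier T" "a j = pi fj" "\<And>k. k \<ge> 1 \<Longrightarrow> fj (ax \<beta> k) = 0"
  shows False
proof -
  define d where "d = fj (0,0)"
  have c1: "fi \<otimes>\<^bsub>T\<^esub> fj \<in> carrier T" using fi fj by simp
  have c2: "fi \<otimes>\<^bsub>T\<^esub> mon d (0,0) \<in> carrier T" using fi by (simp add: mono_carrier)
  have "\<forall>\<gamma> n. (fi \<otimes>\<^bsub>T\<^esub> fj) (ax \<gamma> n) = (fi \<otimes>\<^bsub>T\<^esub> mon d (0, 0)) (ax \<gamma> n)"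
  proof (intro allI)
    fix \<gamma> n
    show "(fi \<otimes>\<^bsub>T\<^esub> fj) (ax \<gamma> n) = (fi \<otimes>\<^bsub>T\<^esub> mon d (0, 0)) (ax \<gamma> n)"
    proof (cases "\<gamma> = \<beta>")
      case False
      hence g: "\<gamma> = (\<not>\<beta>)" by simp
      show ?thesis unfolding mult_const multT_ax g using fi(3) by simp
    next
      case True
      have "(fi \<otimes>\<^bsub>T\<^esub> fj) (ax \<gamma> n) = (\<Sum>k\<le>n. if k = n then fi (ax \<beta> n) * sgb \<beta> n d else 0)"
        unfolding multT_ax True
      proof (rule sum.cong[OF refl])
        fix k assume "k \<in> {..n}"
        thus "fi (ax \<beta> k) * sgb \<beta> k (fj (ax \<beta> (n - k))) = (if k = n then fi (ax \<beta> n) * sgb \<beta> n d else 0)"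
          using fj(3)[of "n-k"] by (auto simp: d_def ring_aut_zero[OF sgb_aut])
      qed
      thus ?thesis unfolding mult_const True by simp
    qed
  qed
  hence "pi (fi \<otimes>\<^bsub>T\<^esub> fj) = pi (fi \<otimes>\<^bsub>T\<^esub> mon d (0,0))" unfolding pi_eq[OF c1 c2] .
  hence "a i \<otimes>\<^bsub>S\<^esub> a j = a i \<otimes>\<^bsub>S\<^esub> S_emb s1 s2 d"
    using fi fj by (simp add: embS mono_carrier)
  also have "\<dots> = S_emb s1 s2 (\<tau> d) \<otimes>\<^bsub>S\<^esub> a i" by (rule aut)
  finally have eq: "a i \<otimes>\<^bsub>S\<^esub> a j = S_emb s1 s2 (\<tau> d) \<otimes>\<^bsub>S\<^esub> a i" .
  define e1 where "e1 = (\<lambda>x. if x = i \<or> x = j then 1 else (0::nat))"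
  define e2 where "e2 = (\<lambda>x. if x = i then 1 else (0::nat))"
  have e12: "e1 \<noteq> e2" using ij unfolding e1_def e2_def by (metis one_neq_zero)
  define c where "c = (\<lambda>e. if e = e1 then 1 else - \<tau> d)"
  have m1: "monomial_in S a e1 m = a i \<otimes>\<^bsub>S\<^esub> a j"
    unfolding e1_def by (subst mon_in_delta2) (use ij a comm RS.monoid_axioms in auto)
  have m2: "monomial_in S a e2 m = a i"
    unfolding e2_def by (subst mon_in_delta) (use ij a RS.monoid_axioms in auto)
  have ai: "a i \<in> carrier S" "a j \<in> carrier S" using a ij by auto
  have "finsum S (\<lambda>e. S_emb s1 s2 (c e) \<otimes>\<^bsub>S\<^esub> monomial_in S a e m) {e1, e2}
      = S_emb s1 s2 (c e1) \<otimes>\<^bsub>S\<^esub> monomial_in S a e1 m \<oplus>\<^bsub>S\<^esub> (S_emb s1 s2 (c e2) \<otimes>\<^bsub>S\<^esub> monomial_in S a e2 m)"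
    using e12 m1 m2 ai by (simp add: RS.finsum_insert emb_closed)
  also have "\<dots> = S_emb s1 s2 (\<tau> d) \<otimes>\<^bsub>S\<^esub> a i \<oplus>\<^bsub>S\<^esub> (\<ominus>\<^bsub>S\<^esub> S_emb s1 s2 (\<tau> d) \<otimes>\<^bsub>S\<^esub> a i)"
    unfolding m1 m2 c_def using e12 eq ai by (simp add: emb_one emb_neg emb_closed)
  also have "\<dots> = \<zero>\<^bsub>S\<^esub>" using ai by (simp add: RS.l_minus emb_closed RS.r_neg)
  finally have "c e1 = 0" using indep[rule_format, of "{e1,e2}" c] ij
    unfolding e1_def e2_def by auto
  thus False by (simp add: c_def)
qed

end

lemma conj_solve2: "(u::'a::division_ring) \<noteq> 0 \<Longrightarrow> u * z = w * u \<Longrightarrow> w = u * z * inverse u"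
proof -
  assume u: "u \<noteq> 0" and e: "u * z = w * u"
  have "w = w * u * inverse u" using u by (simp add: mult.assoc)
  also have "\<dots> = u * z * inverse u" using e by simp
  finally show ?thesis .
qed

lemma conj_inv: "(u::'a::division_ring) \<noteq> 0 \<Longrightarrow> c \<noteq> 0 \<Longrightarrow>
  inverse u * (c * b * inverse c) * u = (inverse u * c) * b * inverse (inverse u * c)"
  by (simp add: nonzero_inverse_mult_distrib mult.assoc)

context skw begin

interpretation R: ring T by (rule ringT)
interpretation RS: ring S by (rule ringS)
interpretation H: ring_hom_ring T S pi by (rule homS)

lemma bij_s2: "bij s2" using a2 by (simp add: ring_aut_def)

lemma emb_Rb: "range (S_emb s1 s2) \<subseteq> Rb \<beta>"
proof
  fix s assume "s \<in> range (S_emb s1 s2)"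
  then obtain b where s: "s = pi (mon b (0,0))" by (auto simp: embS)
  have "\<forall>k\<ge>1. mon b (0,0) (ax \<beta> k) = 0" by (cases \<beta>) (auto simp: mon_def)
  thus "s \<in> Rb \<beta>" unfolding Rb_def using s mono_carrier by blast
qed

lemma forward:
  assumes "aut_normalizable S (S_emb s1 s2)"
  shows "\<exists>k1 k2::nat. k1 > 0 \<and> k2 > 0 \<and> inner_aut ((s1 ^^ k1) \<circ> (inv_into UNIV s2 ^^ k2))"
proof -
  obtain m a \<tau> F where
    ac: "\<forall>i<m. a i \<in> carrier S" and comm: "\<forall>i<m. \<forall>j<m. a i \<otimes>\<^bsub>S\<^esub> a j = a j \<otimes>\<^bsub>S\<^esub> a i"
    and aut: "\<forall>i<m. \<forall>b. a i \<otimes>\<^bsub>S\<^esub> S_emb s1 s2 b = S_emb s1 s2 (\<tau> i b) \<otimes>\<^bsub>S\<^esub> a i"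
    and indep: "\<forall>E c. finite E \<and> (\<forall>e\<in>E. \<forall>i\<ge>m. e i = 0)
              \<and> finsum S (\<lambda>e. S_emb s1 s2 (c e) \<otimes>\<^bsub>S\<^esub> monomial_in S a e m) E = \<zero>\<^bsub>S\<^esub>
              \<longrightarrow> (\<forall>e\<in>E. c e = 0)"
    and Ffin: "finite F" and Fc: "F \<subseteq> carrier S"
    and gen: "\<forall>s\<in>carrier S. \<exists>r. (\<forall>f\<in>F. r f \<in> generate_ring S (range (S_emb s1 s2) \<union> a ` {..<m}))
               \<and> s = finsum S (\<lambda>f. r f \<otimes>\<^bsub>S\<^esub> f) F"
    using assms unfolding aut_normalizable_def by (elim exE conjE) (rule that; assumption)
  have "\<forall>i<m. \<exists>g. g \<in> carrier T \<and> a i = pi g" using ac carrierS by auto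
  then obtain f where f: "\<And>i. i < m \<Longrightarrow> f i \<in> carrier T \<and> a i = pi (f i)" by metis
  have AUT: "f i (ax \<beta> n) * sgb \<beta> n b = \<tau> i b * f i (ax \<beta> n)" if "i < m" for i \<beta> n b
  proof -
    have "pi (f i) \<otimes>\<^bsub>S\<^esub> S_emb s1 s2 b = S_emb s1 s2 (\<tau> i b) \<otimes>\<^bsub>S\<^esub> pi (f i)"
      using aut[rule_format, OF that, of b] f[OF that] by simp
    from aut_coef[OF conjunct1[OF f[OF that]] this] show ?thesis .
  qed
  have Gc: "range (S_emb s1 s2) \<union> a ` {..<m} \<subseteq> carrier S" using ac emb_closed by auto
  define A where "A = {i. i < m \<and> (\<exists>p\<ge>1. f i (ax True p) \<noteq> 0)}"
  define B where "B = {i. i < m \<and> (\<exists>q\<ge>1. f i (ax False q) \<noteq> 0)}"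
  have GRb: "range (S_emb s1 s2) \<union> a ` {..<m} \<subseteq> Rb \<beta>"
    if h: "\<And>i k. i < m \<Longrightarrow> k \<ge> 1 \<Longrightarrow> f i (ax \<beta> k) = 0" for \<beta>
  proof -
    have "a ` {..<m} \<subseteq> Rb \<beta>" unfolding Rb_def using f h by fastforce
    thus ?thesis using emb_Rb by blast
  qed
  show ?thesis
  proof (cases "\<exists>i. i \<in> A \<and> i \<in> B")
    case True
    then obtain i p q where i: "i < m" and p: "p \<ge> 1" "f i (ax True p) \<noteq> 0"
      and q: "q \<ge> 1" "f i (ax False q) \<noteq> 0" unfolding A_def B_def by blast
    have h1: "(s1 ^^ p) b = inverse (f i (ax True p)) * \<tau> i b * inverse (inverse (f i (ax True p)))" for b
      using conj_solve[OF p(2) AUT[OF i, of True p b]] p(2) by (simp add: sgb_True)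
    have h2: "(s2 ^^ q) b = inverse (f i (ax False q)) * \<tau> i b * inverse (inverse (f i (ax False q)))" for b
      using conj_solve[OF q(2) AUT[OF i, of False q b]] q(2) by (simp add: sgb_False)
    have "inner_aut ((s1 ^^ p) \<circ> (inv_into UNIV s2 ^^ q))"
      by (rule inner_lemma[OF bij_s2 _ _ h1 h2]) (use p q in simp_all)
    moreover have "p > 0" "q > 0" using p(1) q(1) by auto
    ultimately show ?thesis by blast
  next
    case False note AB = False
    show ?thesis
    proof (cases "B = {}")
      case True
      have "\<And>i k. i < m \<Longrightarrow> k \<ge> 1 \<Longrightarrow> f i (ax False k) = 0" using True unfolding B_def by blast
      from deg_contra[OF Ffin Fc Gc GRb[OF this] gen] show ?thesis ..
    next
      case False
      then obtain j where j: "j \<in> B" by blast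
      show ?thesis
      proof (cases "A = {}")
        case True
        have "\<And>i k. i < m \<Longrightarrow> k \<ge> 1 \<Longrightarrow> f i (ax True k) = 0" using True unfolding A_def by blast
        from deg_contra[OF Ffin Fc Gc GRb[OF this] gen] show ?thesis ..
      next
        case False
        then obtain i where iA: "i \<in> A" by blast
        have iB: "i \<notin> B" and jA: "j \<notin> A" using AB iA j by auto
        have im: "i < m" and jm: "j < m" using iA j unfolding A_def B_def by auto
        have ij: "i \<noteq> j" using iA jA by auto
        have fiF: "\<And>k. k \<ge> 1 \<Longrightarrow> f i (ax False k) = 0" using iB im unfolding B_def by auto
        have fjT: "\<And>k. k \<ge> 1 \<Longrightarrow> f j (ax True k) = 0" using jA jm unfolding A_def by auto
        define c where "c = f i (0,0)"
        define d where "d = f j (0,0)"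
        show ?thesis
        proof (cases "c = 0")
          case True
          have "\<And>k. f i (ax (\<not>True) k) = 0"
            using fiF True unfolding c_def by (metis ax.simps(2) ax0 less_one not_less)
          from dep_contra[OF im jm ij ac comm[rule_format, OF im jm] aut[rule_format, OF im] indep
              conjunct1[OF f[OF im]] conjunct2[OF f[OF im]] this conjunct1[OF f[OF jm]] conjunct2[OF f[OF jm]] fjT]
          show ?thesis ..
        next
          case False note c0 = False
          show ?thesis
          proof (cases "d = 0")
            case True
            have "\<And>k. f j (ax (\<not>False) k) = 0"
              using fjT True unfolding d_def by (metis ax.simps(1) ax0 less_one not_less)
            from dep_contra[OF jm im ij[symmetric] ac comm[rule_format, OF jm im] aut[rule_format, OF jm] indep
                conjunct1[OF f[OF jm]] conjunct2[OF f[OF jm]] this conjunct1[OF f[OF im]] conjunct2[OF f[OF im]] fiF]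
            show ?thesis ..
          next
            case False note d0 = False
            obtain p where p: "p \<ge> 1" "f i (ax True p) \<noteq> 0" using iA unfolding A_def by blast
            obtain q where q: "q \<ge> 1" "f j (ax False q) \<noteq> 0" using j unfolding B_def by blast
            have ti: "\<tau> i b = c * b * inverse c" for b
              using conj_solve2[OF c0, of b "\<tau> i b"] AUT[OF im, of True 0 b] unfolding c_def by simp
            have tj: "\<tau> j b = d * b * inverse d" for b
              using conj_solve2[OF d0, of b "\<tau> j b"] AUT[OF jm, of True 0 b] unfolding d_def by simp
            have h1: "(s1 ^^ p) b = (inverse (f i (ax True p)) * c) * id b * inverse (inverse (f i (ax True p)) * c)" for b
              using conj_solve[OF p(2) AUT[OF im, of True p b]] conj_inv[OF p(2) c0, of b]
              by (simp add: sgb_True ti)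
            have h2: "(s2 ^^ q) b = (inverse (f j (ax False q)) * d) * id b * inverse (inverse (f j (ax False q)) * d)" for b
              using conj_solve[OF q(2) AUT[OF jm, of False q b]] conj_inv[OF q(2) d0, of b]
              by (simp add: sgb_False tj)
            have "inner_aut ((s1 ^^ p) \<circ> (inv_into UNIV s2 ^^ q))"
              by (rule inner_lemma[OF bij_s2 _ _ h1 h2]) (use p q c0 d0 in simp_all)
            moreover have "p > 0" "q > 0" using p(1) q(1) by auto
    ultimately show ?thesis by blast
          qed
        qed
      qed
    qed
  qed
qed

end

lemma inv_funpow_cancel: "bij (s::'a \<Rightarrow> 'a) \<Longrightarrow> (inv_into UNIV s ^^ q) ((s ^^ q) r) = r"
proof (induct q arbitrary: r)
  case 0 show ?case by simp
next
  case (Suc q)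
  have e1: "(inv_into UNIV s ^^ Suc q) = (inv_into UNIV s ^^ q) \<circ> inv_into UNIV s" by (rule funpow_Suc_right)
  have e2: "(s ^^ Suc q) = s \<circ> (s ^^ q)" by simp
  have "inv_into UNIV s (s ((s ^^ q) r)) = (s ^^ q) r" using Suc.prems by (simp add: bij_def inv_into_f_f)
  thus ?case unfolding e1 e2 using Suc by simp
qed

locale bwd = skw +
  fixes k1 k2 :: nat and c :: 'a
  assumes k1: "k1 > 0" and k2: "k2 > 0" and c0: "c \<noteq> 0"
    and key: "\<And>b. (s1 ^^ k1) b = c * (s2 ^^ k2) b * inverse c"
begin

interpretation R: ring T by (rule ringT)
interpretation RS: ring S by (rule ringS)
interpretation H: ring_hom_ring T S pi by (rule homS)

definition kb where "kb \<beta> = (if \<beta> then k1 else k2)"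
definition cb where "cb \<beta> = (if \<beta> then 1 else c)"
definition Ael where "Ael = (\<lambda>m. mon 1 (k1,0) m + mon c (0,k2) m)"

lemma kb_pos: "kb \<beta> > 0" using k1 k2 by (simp add: kb_def)
lemma cb_nz: "cb \<beta> \<noteq> 0" using c0 by (simp add: cb_def)

lemma Ael_carrier: "Ael \<in> carrier T"
proof -
  have "Ael = mon 1 (k1,0) \<oplus>\<^bsub>T\<^esub> mon c (0,k2)" by (simp add: Ael_def addT)
  thus ?thesis by (simp add: mono_carrier)
qed

lemma Ael_ax: "Ael (ax \<beta> k) = (if k = kb \<beta> then cb \<beta> else 0)"
  using k1 k2 by (cases \<beta>) (auto simp: Ael_def mon_def kb_def cb_def)

lemma Apow_ax: "\<exists>v. v \<noteq> 0 \<and> (\<forall>k. (Ael [^]\<^bsub>T\<^esub> q) (ax \<beta> k) = (if k = kb \<beta> * q then v else 0))"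
proof (induct q)
  case 0
  have "(0::nat) = k \<longleftrightarrow> ax \<beta> k = (0,0)" for k by (cases \<beta>) auto
  thus ?case by (intro exI[of _ 1]) (auto simp: oneT)
next
  case (Suc q)
  then obtain v where v: "v \<noteq> 0" and vq: "\<And>k. (Ael [^]\<^bsub>T\<^esub> q) (ax \<beta> k) = (if k = kb \<beta> * q then v else 0)" by blast
  define v' where "v' = v * sgb \<beta> (kb \<beta> * q) (cb \<beta>)"
  have v': "v' \<noteq> 0" unfolding v'_def using v cb_nz ring_aut_eq0[OF sgb_aut] by simp
  have "(Ael [^]\<^bsub>T\<^esub> Suc q) (ax \<beta> k) = (if k = kb \<beta> * Suc q then v' else 0)" for k
  proof -
    have "(Ael [^]\<^bsub>T\<^esub> Suc q) (ax \<beta> k) = (Ael [^]\<^bsub>T\<^esub> q \<otimes>\<^bsub>T\<^esub> Ael) (ax \<beta> k)" by simp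
    also have "\<dots> = (\<Sum>j\<le>k. if j = kb \<beta> * q then (if k = kb \<beta> * Suc q then v' else 0) else 0)"
      unfolding multT_ax
    proof (rule sum.cong[OF refl])
      fix j assume j: "j \<in> {..k}"
      show "(Ael [^]\<^bsub>T\<^esub> q) (ax \<beta> j) * sgb \<beta> j (Ael (ax \<beta> (k - j))) =
        (if j = kb \<beta> * q then if k = kb \<beta> * Suc q then v' else 0 else 0)"
        using j by (auto simp: vq Ael_ax v'_def ring_aut_zero[OF sgb_aut])
    qed
    also have "\<dots> = (if k = kb \<beta> * Suc q then v' else 0)" by auto
    finally show ?thesis .
  qed
  thus ?case using v' by blast
qed

end

context bwd begin

interpretation R: ring T by (rule ringT)
interpretation RS: ring S by (rule ringS)
interpretation H: ring_hom_ring T S pi by (rule homS)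

definition Vf where "Vf \<beta> q = (SOME v. v \<noteq> 0 \<and> (\<forall>k. (Ael [^]\<^bsub>T\<^esub> q) (ax \<beta> k) = (if k = kb \<beta> * q then v else 0)))"

lemma Vf: "Vf \<beta> q \<noteq> 0" "(Ael [^]\<^bsub>T\<^esub> q) (ax \<beta> k) = (if k = kb \<beta> * q then Vf \<beta> q else 0)"
  using someI_ex[OF Apow_ax[of q \<beta>]] unfolding Vf_def[symmetric] by auto

abbreviation alpha where "alpha \<equiv> pi Ael"

lemma alpha_carrier: "alpha \<in> carrier S" by (simp add: Ael_carrier)

lemma alpha_aut: "alpha \<otimes>\<^bsub>S\<^esub> S_emb s1 s2 b = S_emb s1 s2 ((s1 ^^ k1) b) \<otimes>\<^bsub>S\<^esub> alpha"
proof -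
  have c1: "Ael \<otimes>\<^bsub>T\<^esub> mon b (0,0) \<in> carrier T" by (simp add: Ael_carrier mono_carrier)
  have c2: "mon ((s1 ^^ k1) b) (0,0) \<otimes>\<^bsub>T\<^esub> Ael \<in> carrier T" by (simp add: Ael_carrier mono_carrier)
  have "\<forall>\<beta> n. (Ael \<otimes>\<^bsub>T\<^esub> mon b (0,0)) (ax \<beta> n) = (mon ((s1 ^^ k1) b) (0,0) \<otimes>\<^bsub>T\<^esub> Ael) (ax \<beta> n)"
  proof (intro allI)
    fix \<beta> n
    have "cb \<beta> * sgb \<beta> (kb \<beta>) b = (s1 ^^ k1) b * cb \<beta>"
    proof (cases \<beta>)
      case True thus ?thesis by (simp add: cb_def kb_def sgb_True)
    next
      case False thus ?thesis using c0 by (simp add: cb_def kb_def sgb_False key mult.assoc)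
    qed
    thus "(Ael \<otimes>\<^bsub>T\<^esub> mon b (0,0)) (ax \<beta> n) = (mon ((s1 ^^ k1) b) (0,0) \<otimes>\<^bsub>T\<^esub> Ael) (ax \<beta> n)"
      by (simp add: mult_const const_mult Ael_ax)
  qed
  hence "pi (Ael \<otimes>\<^bsub>T\<^esub> mon b (0,0)) = pi (mon ((s1 ^^ k1) b) (0,0) \<otimes>\<^bsub>T\<^esub> Ael)"
    unfolding pi_eq[OF c1 c2] .
  thus ?thesis by (simp add: embS Ael_carrier mono_carrier)
qed

lemma alpha_pow: "alpha [^]\<^bsub>S\<^esub> (q::nat) = pi (Ael [^]\<^bsub>T\<^esub> q)"
  by (rule H.hom_nat_pow[symmetric, OF Ael_carrier])

lemma alpha_indep:
  assumes E: "finite E" and E0: "\<forall>e\<in>E. \<forall>i\<ge>1. e i = (0::nat)"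
    and sum0: "finsum S (\<lambda>e. S_emb s1 s2 (cf e) \<otimes>\<^bsub>S\<^esub> monomial_in S (\<lambda>_. alpha) e 1) E = \<zero>\<^bsub>S\<^esub>"
    and e0: "e0 \<in> E"
  shows "cf e0 = 0"
proof -
  define G where "G = (\<lambda>e. mon (cf e) (0,0) \<otimes>\<^bsub>T\<^esub> Ael [^]\<^bsub>T\<^esub> (e 0))"
  have Gc: "G \<in> E \<rightarrow> carrier T" unfolding G_def by (auto simp: mono_carrier Ael_carrier)
  have "finsum S (\<lambda>e. S_emb s1 s2 (cf e) \<otimes>\<^bsub>S\<^esub> monomial_in S (\<lambda>_. alpha) e 1) E = finsum S (pi \<circ> G) E"
  proof (rule RS.finsum_cong'[OF refl])
    show "pi \<circ> G \<in> E \<rightarrow> carrier S" using Gc by (auto intro!: H.hom_closed)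
    fix e assume "e \<in> E"
    show "S_emb s1 s2 (cf e) \<otimes>\<^bsub>S\<^esub> monomial_in S (\<lambda>_. alpha) e 1 = (pi \<circ> G) e"
      by (simp add: G_def embS alpha_pow mono_carrier Ael_carrier alpha_carrier)
  qed
  also have "\<dots> = pi (finsum T G E)" by (rule pi_finsum[OF Gc, symmetric])
  finally have "pi (finsum T G E) = pi \<zero>\<^bsub>T\<^esub>" using sum0 by simp
  hence "(finsum T G E) (ax True (k1 * e0 0)) = \<zero>\<^bsub>T\<^esub> (ax True (k1 * e0 0))"
    using pi_eq[OF R.finsum_closed[OF Gc] R.zero_closed] by blast
  hence "(\<Sum>e\<in>E. G e (ax True (k1 * e0 0))) = 0" by (simp add: finsum_evalT[OF Gc] zeroT)
  moreover have "(\<Sum>e\<in>E. G e (ax True (k1 * e0 0))) = (\<Sum>e\<in>E. if e = e0 then cf e0 * Vf True (e0 0) else 0)"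
  proof (rule sum.cong[OF refl])
    fix e assume e: "e \<in> E"
    have "(k1 * e0 0 = k1 * e 0) = (e = e0)"
    proof
      assume "k1 * e0 0 = k1 * e 0"
      hence "e0 0 = e 0" using k1 by simp
      thus "e = e0" using E0 e e0 by (metis ext less_one not_less)
    qed simp
    thus "G e (ax True (k1 * e0 0)) = (if e = e0 then cf e0 * Vf True (e0 0) else 0)"
      unfolding G_def const_mult Vf(2) by (auto simp: kb_def)
  qed
  ultimately have "cf e0 * Vf True (e0 0) = 0" using E e0 by simp
  thus ?thesis using Vf(1) by simp
qed

end

context bwd begin

interpretation R: ring T by (rule ringT)
interpretation RS: ring S by (rule ringS)
interpretation H: ring_hom_ring T S pi by (rule homS)

definition GR where "GR = generate_ring S (range (S_emb s1 s2) \<union> (\<lambda>_. alpha) ` {..<(1::nat)})"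
definition PF where "PF = insert (0,0) (ax True ` {1..k1} \<union> ax False ` {1..k2})"
definition FF where "FF = (\<lambda>p. pi (mon 1 p)) ` PF"
definition Good where "Good = {s. \<exists>r. (\<forall>f\<in>FF. r f \<in> GR) \<and> s = finsum S (\<lambda>f. r f \<otimes>\<^bsub>S\<^esub> f) FF}"

lemma Gsub: "range (S_emb s1 s2) \<union> (\<lambda>_. alpha) ` {..<(1::nat)} \<subseteq> carrier S"
  using emb_closed alpha_carrier by auto

lemma GR_carrier: "x \<in> GR \<Longrightarrow> x \<in> carrier S"
  using RS.generate_ring_in_carrier[OF Gsub] unfolding GR_def by blast

lemma FF_fin: "finite FF" unfolding FF_def PF_def by simp
lemma FF_carrier: "FF \<subseteq> carrier S" unfolding FF_def using mono_carrier by auto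

lemma good_single:
  assumes p0: "p0 \<in> PF" and r0: "r0 \<in> GR"
  shows "r0 \<otimes>\<^bsub>S\<^esub> pi (mon 1 p0) \<in> Good"
proof -
  define f0 where "f0 = pi (mon 1 p0)"
  have f0F: "f0 \<in> FF" unfolding f0_def FF_def using p0 by blast
  define r where "r = (\<lambda>f. if f = f0 then r0 else \<zero>\<^bsub>S\<^esub>)"
  have rG: "\<forall>f\<in>FF. r f \<in> GR" unfolding r_def using r0 RS.zero_in_generate unfolding GR_def by auto
  have r0c: "r0 \<in> carrier S" using GR_carrier r0 by blast
  have "finsum S (\<lambda>f. r f \<otimes>\<^bsub>S\<^esub> f) FF = finsum S (\<lambda>f. if f0 = f then r0 \<otimes>\<^bsub>S\<^esub> f else \<zero>\<^bsub>S\<^esub>) FF"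
  proof (rule RS.finsum_cong'[OF refl])
    show "(\<lambda>f. if f0 = f then r0 \<otimes>\<^bsub>S\<^esub> f else \<zero>\<^bsub>S\<^esub>) \<in> FF \<rightarrow> carrier S"
      using FF_carrier r0c by auto
    fix f assume "f \<in> FF"
    thus "r f \<otimes>\<^bsub>S\<^esub> f = (if f0 = f then r0 \<otimes>\<^bsub>S\<^esub> f else \<zero>\<^bsub>S\<^esub>)"
      unfolding r_def using FF_carrier by auto
  qed
  also have "\<dots> = r0 \<otimes>\<^bsub>S\<^esub> f0"
    by (rule RS.finsum_singleton[OF f0F FF_fin]) (use FF_carrier r0c in auto)
  finally show ?thesis unfolding Good_def f0_def using rG by blast
qed

lemma good_zero: "\<zero>\<^bsub>S\<^esub> \<in> Good"
proof -
  have "(0,0) \<in> PF" by (simp add: PF_def)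
  moreover have "\<zero>\<^bsub>S\<^esub> \<in> GR" unfolding GR_def by (rule RS.zero_in_generate)
  ultimately have "\<zero>\<^bsub>S\<^esub> \<otimes>\<^bsub>S\<^esub> pi (mon 1 (0,0)) \<in> Good" by (rule good_single)
  thus ?thesis
    by (simp add: mono_carrier)
qed

lemma good_carrier: "s \<in> Good \<Longrightarrow> s \<in> carrier S"
  unfolding Good_def using GR_carrier FF_carrier by (auto intro!: RS.finsum_closed)

lemma good_add:
  assumes "x \<in> Good" "y \<in> Good" shows "x \<oplus>\<^bsub>S\<^esub> y \<in> Good"
proof -
  obtain r1 where r1: "\<forall>f\<in>FF. r1 f \<in> GR" "x = finsum S (\<lambda>f. r1 f \<otimes>\<^bsub>S\<^esub> f) FF" using assms(1) Good_def by blast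
  obtain r2 where r2: "\<forall>f\<in>FF. r2 f \<in> GR" "y = finsum S (\<lambda>f. r2 f \<otimes>\<^bsub>S\<^esub> f) FF" using assms(2) Good_def by blast
  define r where "r = (\<lambda>f. r1 f \<oplus>\<^bsub>S\<^esub> r2 f)"
  have rG: "\<forall>f\<in>FF. r f \<in> GR" unfolding r_def using r1 r2 unfolding GR_def by (auto intro: generate_ring.eng_add)
  have c1: "(\<lambda>f. r1 f \<otimes>\<^bsub>S\<^esub> f) \<in> FF \<rightarrow> carrier S" using r1 GR_carrier FF_carrier by auto
  have c2: "(\<lambda>f. r2 f \<otimes>\<^bsub>S\<^esub> f) \<in> FF \<rightarrow> carrier S" using r2 GR_carrier FF_carrier by auto
  have "finsum S (\<lambda>f. r f \<otimes>\<^bsub>S\<^esub> f) FF = finsum S (\<lambda>f. r1 f \<otimes>\<^bsub>S\<^esub> f \<oplus>\<^bsub>S\<^esub> r2 f \<otimes>\<^bsub>S\<^esub> f) FF"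
  proof (rule RS.finsum_cong'[OF refl])
    show "(\<lambda>f. r1 f \<otimes>\<^bsub>S\<^esub> f \<oplus>\<^bsub>S\<^esub> r2 f \<otimes>\<^bsub>S\<^esub> f) \<in> FF \<rightarrow> carrier S" using c1 c2 by auto
    fix f assume f: "f \<in> FF"
    hence "r1 f \<in> carrier S" "r2 f \<in> carrier S" "f \<in> carrier S" using r1 r2 GR_carrier FF_carrier by auto
    thus "r f \<otimes>\<^bsub>S\<^esub> f = r1 f \<otimes>\<^bsub>S\<^esub> f \<oplus>\<^bsub>S\<^esub> r2 f \<otimes>\<^bsub>S\<^esub> f"
      unfolding r_def by (rule RS.l_distr)
  qed
  also have "\<dots> = x \<oplus>\<^bsub>S\<^esub> y" unfolding r1(2) r2(2) by (rule RS.finsum_addf[OF c1 c2])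
  finally show ?thesis unfolding Good_def using rG by auto
qed

end

context bwd begin

interpretation R: ring T by (rule ringT)
interpretation RS: ring S by (rule ringS)
interpretation H: ring_hom_ring T S pi by (rule homS)

lemma alpha_pow_GR: "alpha [^]\<^bsub>S\<^esub> (q::nat) \<in> GR"
proof (induct q)
  case 0 show ?case unfolding GR_def by (simp add: generate_ring.one)
next
  case (Suc q)
  have "alpha \<in> GR" unfolding GR_def by (rule generate_ring.incl) simp
  thus ?case using Suc unfolding GR_def by (simp add: generate_ring.eng_mult)
qed

lemma emb_GR: "S_emb s1 s2 x \<in> GR"
  unfolding GR_def by (rule generate_ring.incl) simp

lemma mon_ax_ax: "1 \<le> i \<Longrightarrow> mon y (ax \<beta> i) (ax \<gamma> t) = (if \<gamma> = \<beta> \<and> t = i then y else 0)"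
  by (cases \<beta>; cases \<gamma>) (auto simp: mon_def)

lemma Apow_mon:
  assumes i: "1 \<le> i"
  shows "(Ael [^]\<^bsub>T\<^esub> q \<otimes>\<^bsub>T\<^esub> mon 1 (ax \<beta> i)) (ax \<gamma> k) = (if \<gamma> = \<beta> \<and> k = kb \<beta> * q + i then Vf \<beta> q else 0)"
proof -
  have hq: "q = 0" if "kb \<delta> * q \<le> t" "t - kb \<delta> * q = t" for \<delta> t
  proof -
    have "kb \<delta> * q = 0" using that by linarith
    thus ?thesis using kb_pos[of \<delta>] by simp
  qed
  have "(Ael [^]\<^bsub>T\<^esub> q \<otimes>\<^bsub>T\<^esub> mon 1 (ax \<beta> i)) (ax \<gamma> k) =
     (\<Sum>j\<le>k. if j = kb \<beta> * q then (if \<gamma> = \<beta> \<and> k = kb \<beta> * q + i then Vf \<beta> q else 0) else 0)"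
    unfolding multT_ax
  proof (rule sum.cong[OF refl])
    fix j assume j: "j \<in> {..k}"
    show "(Ael [^]\<^bsub>T\<^esub> q) (ax \<gamma> j) * sgb \<gamma> j (mon 1 (ax \<beta> i) (ax \<gamma> (k - j))) =
        (if j = kb \<beta> * q then (if \<gamma> = \<beta> \<and> k = kb \<beta> * q + i then Vf \<beta> q else 0) else 0)"
      using j kb_pos[of \<gamma>] kb_pos[of \<beta>] hq by (auto simp: mon_ax_ax[OF i] Vf(2) ring_aut_zero[OF sgb_aut] ring_aut_one[OF sgb_aut])
  qed
  also have "\<dots> = (if \<gamma> = \<beta> \<and> k = kb \<beta> * q + i then Vf \<beta> q else 0)" by auto
  finally show ?thesis .
qed

lemma good_mon: "pi (mon x p) \<in> Good"
proof -
  obtain a b where p: "p = (a,b)" by (cases p)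
  show ?thesis
  proof (cases "a = 0 \<and> b = 0")
    case True
    have "(0,0) \<in> PF" by (simp add: PF_def)
    from good_single[OF this emb_GR[of x]]
    have "pi (mon x (0,0) \<otimes>\<^bsub>T\<^esub> mon 1 (0,0)) \<in> Good" by (simp add: embS mono_carrier)
    moreover have "mon x (0,0) \<otimes>\<^bsub>T\<^esub> mon 1 (0,0) = mon x (0,0)"
      by (rule ext, case_tac xa) (simp add: mono_multT, simp add: mon_def)
    ultimately show ?thesis using True p by simp
  next
    case False note nz = False
    show ?thesis
    proof (cases "a = 0 \<or> b = 0")
      case True
      then obtain \<beta> n where pn: "p = ax \<beta> n" and n: "n \<ge> 1"
        using nz p by (metis ax.simps(1,2) less_one not_less)
      define q where "q = (n - 1) div kb \<beta>"
      define i where "i = (n - 1) mod kb \<beta> + 1"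
      have i1: "1 \<le> i" "i \<le> kb \<beta>" using kb_pos[of \<beta>] unfolding i_def by (auto simp: Suc_le_eq)
      have ni: "n = kb \<beta> * q + i" using n unfolding q_def i_def by simp
      have iPF: "ax \<beta> i \<in> PF" unfolding PF_def using i1 by (cases \<beta>) (auto simp: kb_def)
      define y where "y = x * inverse (Vf \<beta> q)"
      have r0: "S_emb s1 s2 y \<otimes>\<^bsub>S\<^esub> alpha [^]\<^bsub>S\<^esub> q \<in> GR"
        using emb_GR alpha_pow_GR unfolding GR_def by (simp add: generate_ring.eng_mult)
      have "(S_emb s1 s2 y \<otimes>\<^bsub>S\<^esub> alpha [^]\<^bsub>S\<^esub> q) \<otimes>\<^bsub>S\<^esub> pi (mon 1 (ax \<beta> i))
         = pi (mon y (0,0) \<otimes>\<^bsub>T\<^esub> (Ael [^]\<^bsub>T\<^esub> q \<otimes>\<^bsub>T\<^esub> mon 1 (ax \<beta> i)))"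
        by (simp add: embS alpha_pow mono_carrier Ael_carrier RS.m_assoc H.hom_closed)
      also have "\<dots> = pi (mon x p)"
      proof -
        have c1: "mon y (0,0) \<otimes>\<^bsub>T\<^esub> (Ael [^]\<^bsub>T\<^esub> q \<otimes>\<^bsub>T\<^esub> mon 1 (ax \<beta> i)) \<in> carrier T"
          by (simp add: mono_carrier Ael_carrier)
        have "\<forall>\<gamma> k. (mon y (0,0) \<otimes>\<^bsub>T\<^esub> (Ael [^]\<^bsub>T\<^esub> q \<otimes>\<^bsub>T\<^esub> mon 1 (ax \<beta> i))) (ax \<gamma> k) = mon x p (ax \<gamma> k)"
        proof (intro allI)
          fix \<gamma> k
          show "(mon y (0,0) \<otimes>\<^bsub>T\<^esub> (Ael [^]\<^bsub>T\<^esub> q \<otimes>\<^bsub>T\<^esub> mon 1 (ax \<beta> i))) (ax \<gamma> k) = mon x p (ax \<gamma> k)"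
            unfolding const_mult Apow_mon[OF i1(1)] pn mon_ax_ax[OF n] y_def
            using Vf(1)[of \<beta> q] ni by (auto simp: mult.assoc)
        qed
        thus ?thesis unfolding pi_eq[OF c1 mono_carrier] .
      qed
      finally show ?thesis using good_single[OF iPF r0] by simp
    next
      case False
      hence "p \<noteq> ax \<gamma> k" for \<gamma> k using p by (cases \<gamma>) auto
      hence "\<forall>\<gamma> k. mon x p (ax \<gamma> k) = \<zero>\<^bsub>T\<^esub> (ax \<gamma> k)" unfolding mon_def zeroT by metis
      hence "pi (mon x p) = pi \<zero>\<^bsub>T\<^esub>" unfolding pi_eq[OF mono_carrier R.zero_closed] .
      thus ?thesis using good_zero by simp
    qed
  qed
qed

lemma good_finsum: "finite A \<Longrightarrow> (\<forall>a\<in>A. h a \<in> Good) \<Longrightarrow> finsum S h A \<in> Good"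
proof (induct A rule: finite_induct)
  case empty thus ?case using good_zero by simp
next
  case (insert a A)
  have hc: "h \<in> A \<rightarrow> carrier S" "h a \<in> carrier S" using insert.prems good_carrier by auto
  have "finsum S h (insert a A) = h a \<oplus>\<^bsub>S\<^esub> finsum S h A"
    by (rule RS.finsum_insert[OF insert.hyps(1,2) hc])
  thus ?case using insert good_add by simp
qed

lemma good_all: "s \<in> carrier S \<Longrightarrow> s \<in> Good"
proof -
  assume "s \<in> carrier S"
  then obtain g where g: "g \<in> carrier T" "s = pi g" using carrierS by auto
  have Pc: "(\<lambda>m. mon (g m) m) \<in> {m. g m \<noteq> 0} \<rightarrow> carrier T" using mono_carrier by auto
  have "s = pi (finsum T (\<lambda>m. mon (g m) m) {m. g m \<noteq> 0})" using decompT[OF g(1)] g(2) by simp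
  also have "\<dots> = finsum S (pi \<circ> (\<lambda>m. mon (g m) m)) {m. g m \<noteq> 0}" by (rule pi_finsum[OF Pc])
  finally show ?thesis using good_finsum[of "{m. g m \<noteq> 0}" "pi \<circ> (\<lambda>m. mon (g m) m)"] g(1) good_mon
    by (simp add: carrierT)
qed

lemma backward: "aut_normalizable S (S_emb s1 s2)"
  unfolding aut_normalizable_def
proof (intro exI[of _ "1::nat"] exI[of _ "\<lambda>_. alpha"] exI[of _ "\<lambda>_. s1 ^^ k1"] conjI)
  show "\<forall>i<1. alpha \<in> carrier S" using alpha_carrier by simp
  show "\<forall>i<1. \<forall>j<1. alpha \<otimes>\<^bsub>S\<^esub> alpha = alpha \<otimes>\<^bsub>S\<^esub> alpha" by simp
  show "\<forall>i<1. ring_aut (s1 ^^ k1)" using ring_aut_pow[OF a1] by simp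
  show "\<forall>i<1. \<forall>j<1. (s1 ^^ k1) \<circ> (s1 ^^ k1) = (s1 ^^ k1) \<circ> (s1 ^^ k1)" by simp
  show "\<forall>i<1. \<forall>b. alpha \<otimes>\<^bsub>S\<^esub> S_emb s1 s2 b = S_emb s1 s2 ((s1 ^^ k1) b) \<otimes>\<^bsub>S\<^esub> alpha"
    using alpha_aut by simp
  show "\<forall>E cf. finite E \<and> (\<forall>e\<in>E. \<forall>i\<ge>1. e i = 0) \<and>
      finsum S (\<lambda>e. S_emb s1 s2 (cf e) \<otimes>\<^bsub>S\<^esub> monomial_in S (\<lambda>_. alpha) e 1) E = \<zero>\<^bsub>S\<^esub> \<longrightarrow>
      (\<forall>e\<in>E. cf e = 0)"
  proof (intro allI impI ballI)
    fix E cf e assume h: "finite E \<and> (\<forall>e\<in>E. \<forall>i\<ge>1. e i = (0::nat)) \<and>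
      finsum S (\<lambda>e. S_emb s1 s2 (cf e) \<otimes>\<^bsub>S\<^esub> monomial_in S (\<lambda>_. alpha) e 1) E = \<zero>\<^bsub>S\<^esub>"
      and e: "e \<in> E"
    show "cf e = 0" using alpha_indep[OF conjunct1[OF h] conjunct1[OF conjunct2[OF h]] conjunct2[OF conjunct2[OF h]] e] .
  qed
  show "\<exists>F. finite F \<and> F \<subseteq> carrier S \<and>
     (\<forall>s\<in>carrier S. \<exists>r. (\<forall>f\<in>F. r f \<in> generate_ring S (range (S_emb s1 s2) \<union> (\<lambda>_. alpha) ` {..<(1::nat)}))
         \<and> s = finsum S (\<lambda>f. r f \<otimes>\<^bsub>S\<^esub> f) F)"
  proof (intro exI[of _ FF] conjI FF_fin FF_carrier ballI)
    fix s assume "s \<in> carrier S"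
    from good_all[OF this]
    show "\<exists>r. (\<forall>f\<in>FF. r f \<in> generate_ring S (range (S_emb s1 s2) \<union> (\<lambda>_. alpha) ` {..<(1::nat)}))
         \<and> s = finsum S (\<lambda>f. r f \<otimes>\<^bsub>S\<^esub> f) FF"
      unfolding Good_def GR_def by simp
  qed
qed

end

theorem lemma5p10:
  fixes s1 s2 :: "'a::division_ring \<Rightarrow> 'a"
  assumes "ring_aut s1" and "ring_aut s2" and "s1 \<circ> s2 = s2 \<circ> s1"
  shows "aut_normalizable (S_ring s1 s2) (S_emb s1 s2) \<longleftrightarrow>
    (\<exists>k1 k2::nat. k1 > 0 \<and> k2 > 0 \<and> inner_aut ((s1 ^^ k1) \<circ> (inv_into UNIV s2 ^^ k2)))"
proof -
  interpret skw s1 s2 by (unfold_locales; fact assms)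
  show ?thesis
  proof
    assume "aut_normalizable (S_ring s1 s2) (S_emb s1 s2)"
    thus "\<exists>k1 k2::nat. k1 > 0 \<and> k2 > 0 \<and> inner_aut ((s1 ^^ k1) \<circ> (inv_into UNIV s2 ^^ k2))"
      by (rule forward)
  next
    assume "\<exists>k1 k2::nat. k1 > 0 \<and> k2 > 0 \<and> inner_aut ((s1 ^^ k1) \<circ> (inv_into UNIV s2 ^^ k2))"
    then obtain k1 k2 :: nat where k: "k1 > 0" "k2 > 0"
      and inn: "inner_aut ((s1 ^^ k1) \<circ> (inv_into UNIV s2 ^^ k2))" by blast
    obtain c where c0: "c \<noteq> 0" and cr: "\<And>r. ((s1 ^^ k1) \<circ> (inv_into UNIV s2 ^^ k2)) r = c * r * inverse c"
      using inn unfolding inner_aut_def by blast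
    have key: "(s1 ^^ k1) b = c * (s2 ^^ k2) b * inverse c" for b
      using cr[of "(s2 ^^ k2) b"] inv_funpow_cancel[OF bij_s2, of k2 b] by simp
    interpret bwd s1 s2 k1 k2 c
      by (unfold_locales) (use k c0 key in auto)
    show "aut_normalizable (S_ring s1 s2) (S_emb s1 s2)" by (rule backward)
  qed
qed

end
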